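(* Let $f\in\mathbb{C}[\mathrm{GL}_n]$. Then the Ronkin function $R_f$ is (real-valued and) affine on every connected component of $\mathbb{R}^n\setminus\mathrm{s}\mathcal{A}(f)$. In particular, if $\mathbb{R}^n\setminus\mathrm{s}\mathcal{A}(f)\neq\emptyset$, then $R_f$ is not identically equal to $-\infty$.
   Context: $\mathbb{C}[\mathrm{GL}_n]$ is the ring of regular functions on $\mathrm{GL}_n(\mathbb{C})$. $\mathrm{s}\mathcal{A}(f)\subset\mathbb{R}^n$ is the set of vectors $(\ln\lambda_1,\dots,\ln\lambda_n)$ (in any order) where $\lambda_1,\dots,\lambda_n$ are the singular values of some $A\in\mathrm{GL}_n(\mathbb{C})$ with $f(A) = 0$. Let $\mu$ be the Haar probability measure on the unitary group $\mathrm{U}(n)$. The Ronkin function of $f$ is \[R_f(x) = \int_{\mathrm{U}(n)}\int_{\mathrm{U}(n)}\ln|f(U\exp(\mathrm{diag}(x))V^* )|\,d\mu(U)\,d\mu(V)\in\mathbb{R}\cup\{-\infty\},\quad x\in\mathbb{R}^n.\] *)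

theory Defs
  imports "HOL-Probability.Probability"
begin

section \<open>Matrices over C indexed by a finite type 'n (n = CARD('n))\<close>

definition cadj :: "complex^'n^'n \<Rightarrow> complex^'n^'n" where
  "cadj A = (\<chi> i j. cnj (A $ j $ i))"

definition unitary_group :: "(complex^'n^'n) set" where
  "unitary_group = {U. U ** cadj U = mat 1}"

definition exp_diag :: "real^'n \<Rightarrow> complex^'n^'n" where
  "exp_diag x = (\<chi> i j. if i = j then complex_of_real (exp (x $ i)) else 0)"

inductive poly_fun :: "(complex^'n^'n \<Rightarrow> complex) \<Rightarrow> bool" where
  const: "poly_fun (\<lambda>A. c)"
| coord: "poly_fun (\<lambda>A. A $ i $ j)"
| add: "poly_fun p \<Longrightarrow> poly_fun q \<Longrightarrow> poly_fun (\<lambda>A. p A + q A)"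
| mult: "poly_fun p \<Longrightarrow> poly_fun q \<Longrightarrow> poly_fun (\<lambda>A. p A * q A)"

text \<open>C[GL_n] = C[x_ij][1/det]: f is regular on GL_n iff on GL_n it equals p / det^k
  for a polynomial function p. Only the values of f on GL_n are relevant.\<close>
definition regular_GL :: "(complex^'n^'n \<Rightarrow> complex) \<Rightarrow> bool" where
  "regular_GL f \<longleftrightarrow> (\<exists>p k. poly_fun p \<and> (\<forall>A. det A \<noteq> 0 \<longrightarrow> f A = p A / det A ^ k))"

text \<open>x = (ln lambda_1, ..., ln lambda_n) (in some order) where lambda_i are the singular
  values of A, counted with multiplicity: the squares lambda_i^2 are the eigenvalues of
  A^* A with multiplicity, i.e. det(t I - A^* A) = prod_i (t - lambda_i^2).\<close>
definition log_singular_vector :: "complex^'n^'n \<Rightarrow> real^'n \<Rightarrow> bool" where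
  "log_singular_vector A x \<longleftrightarrow>
     (\<forall>t::complex. det (mat t - cadj A ** A) = (\<Prod>i\<in>UNIV. t - complex_of_real ((exp (x $ i))\<^sup>2)))"

definition sA :: "(complex^'n^'n \<Rightarrow> complex) \<Rightarrow> (real^'n) set" where
  "sA f = {x. \<exists>A. det A \<noteq> 0 \<and> f A = 0 \<and> log_singular_vector A x}"

text \<open>mu is the Haar probability measure of U(n), viewed as a Borel measure on the space of
  complex n x n matrices concentrated on U(n) and invariant under left translation by U(n)
  (such a measure is unique).\<close>
definition haar_unitary :: "(complex^'n^'n) measure \<Rightarrow> bool" where
  "haar_unitary \<mu> \<longleftrightarrow> prob_space \<mu> \<and> sets \<mu> = sets borel \<and>
     emeasure \<mu> unitary_group = 1 \<and>
     (\<forall>W\<in>unitary_group. distr \<mu> borel (\<lambda>A. W ** A) = \<mu>)"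

definition eln_abs :: "complex \<Rightarrow> ereal" where
  "eln_abs z = (if z = 0 then -\<infinity> else ereal (ln (cmod z)))"

text \<open>Lebesgue integral of an extended-real function (positive part minus negative part),
  taken as an iterated integral over U and V.\<close>
definition ronkin :: "(complex^'n^'n) measure \<Rightarrow> (complex^'n^'n \<Rightarrow> complex) \<Rightarrow> real^'n \<Rightarrow> ereal" where
  "ronkin \<mu> f x =
     (let g = (\<lambda>U V. eln_abs (f (U ** exp_diag x ** cadj V))) in
       enn2ereal (\<integral>\<^sup>+ U. \<integral>\<^sup>+ V. e2ennreal (max 0 (g U V)) \<partial>\<mu> \<partial>\<mu>)
       - enn2ereal (\<integral>\<^sup>+ U. \<integral>\<^sup>+ V. e2ennreal (max 0 (- g U V)) \<partial>\<mu> \<partial>\<mu>))"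

end

theory Submission
  imports Defs "HOL-Complex_Analysis.Cauchy_Integral_Formula"
begin

definition dg :: "('n::finite \<Rightarrow> complex) \<Rightarrow> complex^'n^'n" where
  "dg d = (\<chi> i j. if i = j then d i else 0)"

lemma exp_diag_dg: "exp_diag x = dg (\<lambda>i. complex_of_real (exp (x $ i)))"
  unfolding exp_diag_def dg_def by simp

lemma dg_mult: "dg d ** dg e = dg (\<lambda>i. d i * e i)"
  unfolding dg_def matrix_matrix_mult_def
  by (simp add: vec_eq_iff if_distrib[where f="\<lambda>z. z * _"] sum.delta cong: if_cong)

lemma cadj_dg: "cadj (dg d) = dg (\<lambda>i. cnj (d i))"
  unfolding dg_def cadj_def by (simp add: vec_eq_iff)

lemma det_dg: "det (dg d) = prod d UNIV"
  by (subst det_diagonal) (auto simp: dg_def)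

lemma cadj_mult: "cadj (A ** B) = cadj B ** cadj A"
  unfolding cadj_def matrix_matrix_mult_def by (simp add: vec_eq_iff mult.commute)

lemma cadj_cadj[simp]: "cadj (cadj A) = A"
  unfolding cadj_def by (simp add: vec_eq_iff)

lemma cadj_mat[simp]: "cadj (mat 1) = (mat 1 :: complex^'n^'n)"
  unfolding cadj_def mat_def by (simp add: vec_eq_iff)

lemma unitary_iff: "U \<in> unitary_group \<longleftrightarrow> U ** cadj U = mat 1"
  by (simp add: unitary_group_def)

lemma unitary_left: assumes "U \<in> unitary_group" shows "cadj U ** U = mat 1"
proof -
  have r: "U ** cadj U = mat 1" using assms unitary_iff by blast
  then obtain B where B: "B ** U = mat 1" using matrix_left_right_inverse by blast
  have "B = B ** (U ** cadj U)" using r by (simp add: matrix_mul_rid)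
  also have "\<dots> = cadj U" using B by (simp add: matrix_mul_assoc matrix_mul_lid)
  finally show ?thesis using B by simp
qed

lemma unitary_mult: "U \<in> unitary_group \<Longrightarrow> V \<in> unitary_group \<Longrightarrow> U ** V \<in> unitary_group"
  unfolding unitary_iff cadj_mult
  by (metis matrix_mul_assoc matrix_mul_rid)

lemma unitary_cadj: "U \<in> unitary_group \<Longrightarrow> cadj U \<in> unitary_group"
  using unitary_left unitary_iff by fastforce

lemma unitary_mat1: "mat 1 \<in> unitary_group"
  by (simp add: unitary_iff matrix_mul_lid)

lemma unitary_dg: "(\<And>i. cmod (d i) = 1) \<Longrightarrow> dg d \<in> unitary_group"
  unfolding unitary_iff cadj_dg dg_mult
  by (simp add: dg_def mat_def vec_eq_iff complex_mult_cnj cmod_def power2_eq_square)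

lemma matrix_sub_ldistrib: "(A::'a::ring_1^'m^'n) ** (B - C) = A ** B - A ** C"
  unfolding matrix_matrix_mult_def by (simp add: vec_eq_iff algebra_simps sum_subtractf)

lemma matrix_sub_rdistrib: "((B - C)::'a::ring_1^'m^'n) ** A = B ** A - C ** A"
  unfolding matrix_matrix_mult_def by (simp add: vec_eq_iff algebra_simps sum_subtractf)

lemma det_unitary: "U \<in> unitary_group \<Longrightarrow> det U \<noteq> 0"
  by (metis det_I det_mul mult_zero_left unitary_iff zero_neq_one)

lemma log_singular_unitary:
  assumes U: "U \<in> unitary_group" and V: "V \<in> unitary_group"
  shows "log_singular_vector (U ** exp_diag x ** cadj V) x"
  unfolding log_singular_vector_def
proof
  fix t :: complex
  let ?D = "exp_diag x"
  have cD: "cadj ?D = ?D" by (simp add: exp_diag_dg cadj_dg)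
  have "cadj (U ** ?D ** cadj V) ** (U ** ?D ** cadj V) = V ** (?D ** (cadj U ** U) ** ?D) ** cadj V"
    by (simp add: cadj_mult cD matrix_mul_assoc)
  also have "\<dots> = V ** (?D ** ?D) ** cadj V"
    using unitary_left[OF U] by (simp add: matrix_mul_rid)
  finally have e: "cadj (U ** ?D ** cadj V) ** (U ** ?D ** cadj V) = V ** (?D ** ?D) ** cadj V" .
  have mt: "mat t = dg (\<lambda>_. t)" by (simp add: mat_def dg_def)
  have comm: "dg (\<lambda>_. t) ** A = A ** dg (\<lambda>_. t)" for A :: "complex^'n^'n"
    unfolding dg_def matrix_matrix_mult_def
    by (simp add: vec_eq_iff if_distrib[where f="\<lambda>z. z * _"] if_distrib[where f="\<lambda>z. _ * z"] sum.delta sum.delta' mult.commute cong: if_cong)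
  have VV: "V ** cadj V = mat 1" using V unitary_iff by blast
  have m: "mat t = V ** mat t ** cadj V"
    by (simp add: mt comm matrix_mul_assoc[symmetric]) (simp add: matrix_mul_assoc VV matrix_mul_rid)
  have "mat t - cadj (U ** ?D ** cadj V) ** (U ** ?D ** cadj V) = V ** (mat t - ?D ** ?D) ** cadj V"
    unfolding e by (subst m) (simp add: matrix_sub_ldistrib matrix_sub_rdistrib)
  hence "det (mat t - cadj (U ** ?D ** cadj V) ** (U ** ?D ** cadj V)) = det (mat t - ?D ** ?D) * det (V ** cadj V)"
    by (simp add: det_mul)
  also have "\<dots> = det (mat t - ?D ** ?D)" using VV by simp
  also have "mat t - ?D ** ?D = dg (\<lambda>i. t - complex_of_real ((exp (x $ i))\<^sup>2))"
    by (simp add: exp_diag_dg dg_mult mt) (simp add: dg_def vec_eq_iff power2_eq_square)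
  finally show "det (mat t - cadj (U ** ?D ** cadj V) ** (U ** ?D ** cadj V)) = (\<Prod>i\<in>UNIV. t - complex_of_real ((exp (x $ i))\<^sup>2))"
    by (simp add: det_dg)
qed


lemma cont_nth: "continuous_on S f \<Longrightarrow> continuous_on S (\<lambda>x. f x $ i)"
  unfolding continuous_on_def by (auto intro: tendsto_vec_nth)

lemma poly_fun_cont:
  "poly_fun p \<Longrightarrow> (\<And>i j. continuous_on S (\<lambda>w. M w $ i $ j)) \<Longrightarrow> continuous_on S (\<lambda>w. p (M w))"
  by (induction rule: poly_fun.induct) (auto intro!: continuous_intros)

lemma poly_fun_holo:
  "poly_fun p \<Longrightarrow> (\<And>i j. (\<lambda>w. M w $ i $ j) holomorphic_on S) \<Longrightarrow> (\<lambda>w. p (M w)) holomorphic_on S"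
  by (induction rule: poly_fun.induct) (auto intro!: holomorphic_intros)

lemma det_cont:
  fixes M :: "_ \<Rightarrow> complex^'n^'n"
  assumes "\<And>i j. continuous_on S (\<lambda>w. M w $ i $ j)" shows "continuous_on S (\<lambda>w. det (M w))"
  unfolding det_def by (intro continuous_on_sum continuous_on_mult continuous_on_const continuous_on_prod assms)

lemma det_holo:
  fixes M :: "_ \<Rightarrow> complex^'n^'n"
  shows "(\<And>i j. (\<lambda>w. M w $ i $ j) holomorphic_on S) \<Longrightarrow> (\<lambda>w. det (M w)) holomorphic_on S"
  unfolding det_def by (intro holomorphic_intros) auto

lemma entry_udv: "(U ** dg d ** cadj V) $ i $ j = (\<Sum>k\<in>UNIV. U $ i $ k * d k * cnj (V $ j $ k))"
  unfolding matrix_matrix_mult_def dg_def cadj_def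
  by (simp add: if_distrib[where f="\<lambda>z. _ * z"] if_distrib[where f="\<lambda>z. z * _"] sum.delta' sum_distrib_right cong: if_cong)

definition EZ :: "complex^'n \<Rightarrow> complex^'n^'n" where "EZ z = dg (\<lambda>i. exp (z $ i))"

definition cvec :: "real^'n \<Rightarrow> complex^'n" where "cvec x = (\<chi> i. complex_of_real (x $ i))"

definition rvec :: "complex^'n \<Rightarrow> real^'n" where "rvec z = (\<chi> i. Re (z $ i))"

definition Fz :: "(complex^'n^'n \<Rightarrow> complex) \<Rightarrow> nat \<Rightarrow> complex^'n^'n \<Rightarrow> complex^'n^'n \<Rightarrow> complex^'n \<Rightarrow> complex" where
  "Fz p k U V z = p (U ** EZ z ** cadj V) / det (U ** EZ z ** cadj V) ^ k"

lemma EZ_cvec: "EZ (cvec x) = exp_diag x"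
  by (simp add: EZ_def cvec_def exp_diag_dg exp_of_real)

lemma EZ_split: "EZ z = dg (\<lambda>i. cis (Im (z $ i))) ** exp_diag (rvec z)"
  by (simp add: EZ_def exp_diag_dg dg_mult rvec_def exp_eq_polar mult.commute)

lemma det_EZ: "U \<in> unitary_group \<Longrightarrow> V \<in> unitary_group \<Longrightarrow> det (U ** EZ z ** cadj V) \<noteq> 0"
  by (simp add: det_mul EZ_def det_dg det_unitary unitary_cadj)

lemma rvec_cvec[simp]: "rvec (cvec x) = x"
  by (simp add: rvec_def cvec_def vec_eq_iff)

lemma cvec_nth[simp]: "cvec x $ i = complex_of_real (x $ i)"
  by (simp add: cvec_def)

lemma dg_one: "dg (\<lambda>i. 1) = mat 1"
  by (simp add: dg_def mat_def)

lemma Fz_shift: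
  "Fz p k U V z = Fz p k (U ** dg (\<lambda>i. cis (Im (z $ i)))) V (cvec (rvec z))"
  by (simp add: Fz_def EZ_cvec EZ_split matrix_mul_assoc dg_one matrix_mul_lid)

lemma unitary_phase: "dg (\<lambda>i. cis (t i)) \<in> unitary_group"
  by (rule unitary_dg) simp

definition Om :: "(complex^'n^'n \<Rightarrow> complex) \<Rightarrow> nat \<Rightarrow> (real^'n) set" where
  "Om p k = {x. \<forall>U\<in>unitary_group. \<forall>V\<in>unitary_group. Fz p k U V (cvec x) \<noteq> 0}"

lemma Fz_nonzero:
  assumes "U \<in> unitary_group" "V \<in> unitary_group" "rvec z \<in> Om p k"
  shows "Fz p k U V z \<noteq> 0"
proof -
  have "U ** dg (\<lambda>i. cis (Im (z $ i))) \<in> unitary_group"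
    by (rule unitary_mult[OF assms(1) unitary_phase])
  thus ?thesis using assms unfolding Om_def by (subst Fz_shift) auto
qed

lemma entry_UEV: "(U ** EZ z ** cadj V) $ i $ j = (\<Sum>k\<in>UNIV. U $ i $ k * exp (z $ k) * cnj (V $ j $ k))"
  by (simp add: EZ_def entry_udv)

lemma Fz_cont:
  assumes p: "poly_fun p"
    and cU: "continuous_on S (\<lambda>w. Uf w)" and cV: "continuous_on S (\<lambda>w. Vf w)"
    and cz: "continuous_on S (\<lambda>w. zf w)"
    and uS: "\<And>w. w \<in> S \<Longrightarrow> Uf w \<in> unitary_group \<and> Vf w \<in> unitary_group"
  shows "continuous_on S (\<lambda>w. Fz p k (Uf w) (Vf w) (zf w))"
proof -
  have e: "continuous_on S (\<lambda>w. (Uf w ** EZ (zf w) ** cadj (Vf w)) $ i $ j)" for i j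
    unfolding entry_UEV by (intro continuous_intros cont_nth[OF cont_nth[OF cU]] cont_nth[OF cont_nth[OF cV]] cont_nth[OF cz])
  show ?thesis unfolding Fz_def
    by (intro continuous_intros poly_fun_cont[OF p e] det_cont[OF e]) (use uS det_EZ in auto)
qed

lemma Fz_holo:
  assumes p: "poly_fun p" and U: "U \<in> unitary_group" and V: "V \<in> unitary_group"
    and hz: "\<And>i. (\<lambda>w. zf w $ i) holomorphic_on S"
  shows "(\<lambda>w. Fz p k U V (zf w)) holomorphic_on S"
proof -
  have e: "(\<lambda>w. (U ** EZ (zf w) ** cadj V) $ i $ j) holomorphic_on S" for i j
    unfolding entry_UEV by (intro holomorphic_intros hz)
  show ?thesis unfolding Fz_def
    by (intro holomorphic_intros poly_fun_holo[OF p e] det_holo[OF e]) (use U V det_EZ in auto)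
qed

lemma unitary_entry_bound: assumes "U \<in> unitary_group" shows "cmod (U $ i $ j) \<le> 1"
proof -
  have "(U ** cadj U) $ i $ i = 1" using assms by (simp add: unitary_iff mat_def)
  hence "(\<Sum>k\<in>UNIV. U $ i $ k * cnj (U $ i $ k)) = 1"
    by (simp add: matrix_matrix_mult_def cadj_def)
  moreover have "U $ i $ k * cnj (U $ i $ k) = complex_of_real ((cmod (U $ i $ k))\<^sup>2)" for k
    by (simp add: complex_mult_cnj cmod_power2 del: of_real_power)
  ultimately have "(\<Sum>k\<in>UNIV. complex_of_real ((cmod (U $ i $ k))\<^sup>2)) = 1"
    by simp
  hence s: "(\<Sum>k\<in>UNIV. (cmod (U $ i $ k))\<^sup>2) = 1"
    by (metis of_real_eq_1_iff of_real_sum)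
  have "(cmod (U $ i $ j))\<^sup>2 \<le> (\<Sum>k\<in>UNIV. (cmod (U $ i $ k))\<^sup>2)"
    by (rule member_le_sum) auto
  hence "(cmod (U $ i $ j))\<^sup>2 \<le> 1" using s by simp
  thus ?thesis by (simp add: power_le_one_iff abs_square_le_1)
qed

lemma closed_unitary: "closed (unitary_group :: (complex^'n^'n) set)"
proof -
  have "continuous_on UNIV (\<lambda>U::complex^'n^'n. U ** cadj U)"
  proof -
    have eq: "(\<lambda>U::complex^'n^'n. U ** cadj U) = (\<lambda>U. \<chi> i j. \<Sum>k\<in>UNIV. U $ i $ k * cnj (U $ j $ k))"
      by (simp add: fun_eq_iff vec_eq_iff matrix_matrix_mult_def cadj_def)
    have "continuous_on UNIV (\<lambda>U::complex^'n^'n. \<chi> i j. \<Sum>k\<in>UNIV. U $ i $ k * cnj (U $ j $ k))"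
      by (intro continuous_intros continuous_on_vec_lambda cont_nth[OF cont_nth[OF continuous_on_id]])
    thus ?thesis unfolding eq .
  qed
  hence "closed {U::complex^'n^'n. U ** cadj U = mat 1}"
    by (intro closed_Collect_eq) (auto intro: continuous_intros)
  thus ?thesis by (simp add: unitary_group_def)
qed

lemma bounded_unitary: "bounded (unitary_group :: (complex^'n^'n) set)"
proof -
  have "norm U \<le> real CARD('n) * real CARD('n)" if "U \<in> unitary_group" for U :: "complex^'n^'n"
  proof -
    have "norm U \<le> (\<Sum>i\<in>UNIV. norm (U $ i))" by (simp add: norm_vec_def L2_set_le_sum)
    also have "\<dots> \<le> (\<Sum>i\<in>(UNIV::'n set). real CARD('n))"
    proof (rule sum_mono)
      fix i
      have "norm (U $ i) \<le> (\<Sum>j\<in>UNIV. norm (U $ i $ j))" by (simp add: norm_vec_def L2_set_le_sum)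
      also have "\<dots> \<le> (\<Sum>j\<in>(UNIV::'n set). 1)"
        by (rule sum_mono) (use unitary_entry_bound[OF that] in auto)
      finally show "norm (U $ i) \<le> real CARD('n)" by simp
    qed
    finally show ?thesis by simp
  qed
  thus ?thesis unfolding bounded_iff by blast
qed

lemma compact_unitary: "compact (unitary_group :: (complex^'n^'n) set)"
  using bounded_unitary closed_unitary by (simp add: compact_eq_bounded_closed)


lemma cont_matmul:
  fixes f g :: "_ \<Rightarrow> complex^'n^'n"
  assumes "continuous_on S f" "continuous_on S g"
  shows "continuous_on S (\<lambda>x. f x ** g x)"
proof -
  have eq: "(\<lambda>x. f x ** g x) = (\<lambda>x. \<chi> i j. \<Sum>k\<in>UNIV. f x $ i $ k * g x $ k $ j)"
    by (simp add: fun_eq_iff vec_eq_iff matrix_matrix_mult_def)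
  show ?thesis unfolding eq
    by (intro continuous_intros continuous_on_vec_lambda cont_nth[OF cont_nth[OF assms(1)]] cont_nth[OF cont_nth[OF assms(2)]])
qed

lemma cont_cadj:
  fixes f :: "_ \<Rightarrow> complex^'n^'n"
  assumes "continuous_on S f"
  shows "continuous_on S (\<lambda>x. cadj (f x))"
proof -
  have eq: "(\<lambda>x. cadj (f x)) = (\<lambda>x. \<chi> i j. cnj (f x $ j $ i))"
    by (simp add: fun_eq_iff vec_eq_iff cadj_def)
  show ?thesis unfolding eq
    by (intro continuous_intros continuous_on_vec_lambda cont_nth[OF cont_nth[OF assms(1)]])
qed

lemma meas_lmul[measurable]: "(\<lambda>A::complex^'n^'n. (W::complex^'n^'n) ** A) \<in> borel_measurable borel"
  by (rule borel_measurable_continuous_onI[OF cont_matmul[OF continuous_on_const continuous_on_id]])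

lemma meas_rmul[measurable]: "(\<lambda>A::complex^'n^'n. A ** (W::complex^'n^'n)) \<in> borel_measurable borel"
  by (rule borel_measurable_continuous_onI[OF cont_matmul[OF continuous_on_id continuous_on_const]])

lemma meas_cadj[measurable]: "(cadj :: complex^'n^'n \<Rightarrow> _) \<in> borel_measurable borel"
  using borel_measurable_continuous_onI[OF cont_cadj[OF continuous_on_id]] by simp

lemma meas_mult_pair: "(\<lambda>q::(complex^'n^'n) \<times> (complex^'n^'n). snd q ** fst q) \<in> borel_measurable borel"
  by (intro borel_measurable_continuous_onI cont_matmul continuous_intros)

lemma borel_unitary[measurable]: "(unitary_group :: (complex^'n^'n) set) \<in> sets borel"
  using closed_unitary by (rule borel_closed)

context
  fixes \<mu> :: "(complex^'n^'n) measure"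
  assumes H: "haar_unitary \<mu>"
begin

lemma H_prob: "prob_space \<mu>" using H by (simp add: haar_unitary_def)
lemma H_sets: "sets \<mu> = sets borel" using H by (simp add: haar_unitary_def)
lemma H_space: "space \<mu> = UNIV" using H_sets sets_eq_imp_space_eq by fastforce
lemma H_meas_iff: "measurable \<mu> N = measurable borel N"
  by (rule measurable_cong_sets) (simp_all add: H_sets)

lemma H_AE: "AE U in \<mu>. U \<in> unitary_group"
proof -
  interpret prob_space \<mu> by (rule H_prob)
  have "prob unitary_group = 1" using H by (simp add: haar_unitary_def measure_def)
  thus ?thesis by (rule AE_prob_1)
qed

lemma H_left: "W \<in> unitary_group \<Longrightarrow> distr \<mu> borel (\<lambda>A. W ** A) = \<mu>"
  using H by (simp add: haar_unitary_def)

lemma H_left_nn: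
  assumes W: "W \<in> unitary_group" and g: "g \<in> borel_measurable borel"
  shows "(\<integral>\<^sup>+ U. g (W ** U) \<partial>\<mu>) = integral\<^sup>N \<mu> g"
proof -
  have "integral\<^sup>N \<mu> g = integral\<^sup>N (distr \<mu> borel (\<lambda>A. W ** A)) g" using H_left[OF W] by simp
  also have "\<dots> = (\<integral>\<^sup>+ U. g (W ** U) \<partial>\<mu>)"
    by (rule nn_integral_distr) (simp_all add: H_meas_iff g)
  finally show ?thesis by simp
qed

definition "\<nu> = distr \<mu> borel cadj"

lemma nu_sets: "sets \<nu> = sets borel" by (simp add: \<nu>_def)

lemma nu_prob: "prob_space \<nu>"
  unfolding \<nu>_def by (rule prob_space.prob_space_distr[OF H_prob]) (simp add: H_meas_iff)

lemma nu_AE: "AE V in \<nu>. V \<in> unitary_group"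
  unfolding \<nu>_def
  by (subst AE_distr_iff) (simp_all add: H_meas_iff, use H_AE unitary_cadj in force)

lemma nu_eq: "\<nu> = \<mu>"
proof (rule measure_eqI)
  show "sets \<nu> = sets \<mu>" by (simp add: nu_sets H_sets)
  fix B assume "B \<in> sets \<nu>"
  hence B[measurable]: "B \<in> sets borel" by (simp add: nu_sets)
  interpret M: prob_space \<mu> by (rule H_prob)
  interpret N: prob_space \<nu> by (rule nu_prob)
  interpret P: pair_sigma_finite \<mu> \<nu> by unfold_locales
  have i: "emeasure \<mu> B = (\<integral>\<^sup>+ U. indicator B (V ** U) \<partial>\<mu>)" if V: "V \<in> unitary_group" for V
    using H_left_nn[OF V, of "indicator B"] by (simp add: H_sets)
  have "emeasure \<mu> B = (\<integral>\<^sup>+ V. emeasure \<mu> B \<partial>\<nu>)" by (simp add: N.emeasure_space_1)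
  also have "\<dots> = (\<integral>\<^sup>+ V. \<integral>\<^sup>+ U. indicator B (V ** U) \<partial>\<mu> \<partial>\<nu>)"
    by (rule nn_integral_cong_AE) (use nu_AE i in auto)
  also have "\<dots> = (\<integral>\<^sup>+ U. \<integral>\<^sup>+ V. indicator B (V ** U) \<partial>\<nu> \<partial>\<mu>)"
  proof (rule P.Fubini')
    have "(\<lambda>q. indicator B (snd q ** fst q) :: ennreal) \<in> borel_measurable (\<mu> \<Otimes>\<^sub>M \<nu>)"
    proof -
      have "sets (\<mu> \<Otimes>\<^sub>M \<nu>) = sets (borel \<Otimes>\<^sub>M borel)" by (rule sets_pair_measure_cong) (simp_all add: H_sets nu_sets)
      also have "\<dots> = sets borel" by (metis borel_prod)
      finally have s: "sets (\<mu> \<Otimes>\<^sub>M \<nu>) = sets borel" .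
      have "(\<lambda>q::(complex^'n^'n) \<times> (complex^'n^'n). indicator B (snd q ** fst q) :: ennreal) \<in> borel_measurable borel"
        using measurable_compose[OF meas_mult_pair borel_measurable_indicator[OF B]] by (simp add: o_def)
      thus ?thesis by (subst measurable_cong_sets[OF s refl])
    qed
    thus "(\<lambda>(x, y). indicator B (y ** x) :: ennreal) \<in> borel_measurable (\<mu> \<Otimes>\<^sub>M \<nu>)"
      by (simp add: case_prod_beta)
  qed
  also have "\<dots> = (\<integral>\<^sup>+ U. emeasure \<nu> B \<partial>\<mu>)"
  proof (rule nn_integral_cong_AE)
    show "AE U in \<mu>. (\<integral>\<^sup>+ V. indicator B (V ** U) \<partial>\<nu>) = emeasure \<nu> B"
    proof (rule AE_mp[OF H_AE], intro AE_I2 impI)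
      fix U :: "complex^'n^'n" assume U: "U \<in> unitary_group"
      have "(\<integral>\<^sup>+ V. indicator B (V ** U) \<partial>\<nu>) = (\<integral>\<^sup>+ A. indicator B (cadj A ** U) \<partial>\<mu>)"
        unfolding \<nu>_def by (subst nn_integral_distr) (simp_all add: H_meas_iff)
      also have "\<dots> = (\<integral>\<^sup>+ A. indicator (cadj -` B) (cadj U ** A) \<partial>\<mu>)"
        by (simp add: cadj_mult indicator_def)
      also have "\<dots> = (\<integral>\<^sup>+ A. indicator (cadj -` B) A \<partial>\<mu>)"
        by (rule H_left_nn[OF unitary_cadj[OF U]]) simp
      also have "\<dots> = emeasure \<nu> B"
      proof -
        have cB: "cadj -` B \<in> sets \<mu>" using measurable_sets[OF meas_cadj B] by (simp add: H_sets)
        show ?thesis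
          unfolding \<nu>_def by (subst emeasure_distr) (simp_all add: H_meas_iff H_space cB)
      qed
      finally show "(\<integral>\<^sup>+ V. indicator B (V ** U) \<partial>\<nu>) = emeasure \<nu> B" .
    qed
  qed
  also have "\<dots> = emeasure \<nu> B" by (simp add: M.emeasure_space_1)
  finally show "emeasure \<nu> B = emeasure \<mu> B" by simp
qed

lemma H_right: assumes W: "W \<in> unitary_group" shows "distr \<mu> borel (\<lambda>A. A ** W) = \<mu>"
proof -
  have "distr \<mu> borel (\<lambda>A. A ** W) = distr \<nu> borel (\<lambda>A. A ** W)" by (simp add: nu_eq)
  also have "\<dots> = distr \<mu> borel (\<lambda>A. cadj A ** W)"
    unfolding \<nu>_def by (subst distr_distr) (simp_all add: H_meas_iff o_def)
  also have "(\<lambda>A. cadj A ** W) = (\<lambda>A. cadj (cadj W ** A))" by (simp add: cadj_mult)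
  also have "distr \<mu> borel (\<lambda>A. cadj (cadj W ** A)) = distr (distr \<mu> borel (\<lambda>A. cadj W ** A)) borel cadj"
    by (subst distr_distr) (simp_all add: H_meas_iff o_def)
  also have "\<dots> = \<nu>" unfolding \<nu>_def using H_left[OF unitary_cadj[OF W]] by simp
  finally show ?thesis by (simp add: nu_eq)
qed

lemma H_right_int:
  fixes g :: "complex^'n^'n \<Rightarrow> real"
  assumes W: "W \<in> unitary_group" and g: "g \<in> borel_measurable borel"
  shows "(\<integral> U. g (U ** W) \<partial>\<mu>) = integral\<^sup>L \<mu> g"
proof -
  have "integral\<^sup>L \<mu> g = integral\<^sup>L (distr \<mu> borel (\<lambda>A. A ** W)) g" using H_right[OF W] by simp
  also have "\<dots> = (\<integral> U. g (U ** W) \<partial>\<mu>)"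
    by (rule integral_distr) (simp_all add: H_meas_iff g)
  finally show ?thesis by simp
qed

end

lemma mean_value_ln:
  assumes hol: "P holomorphic_on ball 0 \<rho>" and nz: "\<And>w. w \<in> ball 0 \<rho> \<Longrightarrow> P w \<noteq> 0"
    and r: "0 < r" "r < \<rho>"
  shows "((\<lambda>t. ln (cmod (P (circlepath 0 r t)))) has_integral ln (cmod (P 0))) {0..1}"
proof -
  have "0 \<in> ball (0::complex) \<rho>" using r by simp
  then obtain g where g: "g holomorphic_on ball 0 \<rho>" and eg: "\<And>x. x \<in> ball 0 \<rho> \<Longrightarrow> exp (g x) = P x"
    using holomorphic_logarithm_exists[OF convex_ball open_ball hol nz] by metis
  have gc: "g holomorphic_on cball 0 r"
    using g by (rule holomorphic_on_subset) (use r in auto)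
  have ci: "((\<lambda>u. g u / (u - 0)) has_contour_integral 2 * complex_of_real pi * \<i> * g 0) (circlepath 0 r)"
    by (rule Cauchy_integral_circlepath_simple[OF gc]) (use r in simp)
  hence "((\<lambda>x. g (circlepath 0 r x) / (circlepath 0 r x - 0) * vector_derivative (circlepath 0 r) (at x within {0..1}))
          has_integral 2 * complex_of_real pi * \<i> * g 0) {0..1}"
    by (simp add: has_contour_integral_def)
  hence "((\<lambda>x. 2 * complex_of_real pi * \<i> * g (circlepath 0 r x)) has_integral 2 * complex_of_real pi * \<i> * g 0) {0..1}"
  proof (rule has_integral_spike_finite[OF finite.emptyI, rotated])
    fix x :: real assume "x \<in> {0..1} - {}"
    hence x: "0 \<le> x" "x \<le> 1" by auto
    show "2 * complex_of_real pi * \<i> * g (circlepath 0 r x) = g (circlepath 0 r x) / (circlepath 0 r x - 0) * vector_derivative (circlepath 0 r) (at x within {0..1})"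
      using r by (simp only: vector_derivative_circlepath01[OF x]) (simp add: circlepath field_simps)
  qed
  hence "((\<lambda>x. (1 / (2 * complex_of_real pi * \<i>)) * (2 * complex_of_real pi * \<i> * g (circlepath 0 r x))) has_integral
     (1 / (2 * complex_of_real pi * \<i>)) * (2 * complex_of_real pi * \<i> * g 0)) {0..1}"
    by (rule has_integral_mult_right)
  hence "((\<lambda>x. g (circlepath 0 r x)) has_integral g 0) {0..1}"
    by simp
  hence "((Re \<circ> (\<lambda>x. g (circlepath 0 r x))) has_integral Re (g 0)) {0..1}"
    by (rule has_integral_linear) (rule bounded_linear_Re)
  moreover have "Re (g w) = ln (cmod (P w))" if "w \<in> ball 0 \<rho>" for w
    using eg[OF that] by (metis ln_exp norm_exp_eq_Re)
  moreover have "circlepath 0 r x \<in> ball 0 \<rho>" for x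
    using r by (simp add: circlepath norm_mult)
  ultimately show ?thesis using \<open>0 \<in> ball 0 \<rho>\<close> by (simp add: o_def)
qed


definition mvprop :: "(real \<Rightarrow> real) \<Rightarrow> real \<Rightarrow> bool" where
  "mvprop g s \<longleftrightarrow> (\<exists>r0>0. \<forall>r. 0 < r \<and> r < r0 \<longrightarrow> ((\<lambda>t. g (s + r * cos (2 * pi * t))) has_integral g s) {0..1})"

lemma max_principle:
  fixes q :: "real \<Rightarrow> real"
  assumes cont: "continuous_on {\<alpha>..\<beta>} q" and qa: "q \<alpha> \<le> 0" and qb: "q \<beta> \<le> 0"
    and mv: "\<And>s. s \<in> {\<alpha><..<\<beta>} \<Longrightarrow> mvprop q s"
    and s: "s \<in> {\<alpha>..\<beta>}"
  shows "q s \<le> 0"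
proof (rule ccontr)
  assume "\<not> q s \<le> 0"
  hence qs: "q s > 0" by simp
  obtain m0 where m0: "m0 \<in> {\<alpha>..\<beta>}" and mx: "\<And>y. y \<in> {\<alpha>..\<beta>} \<Longrightarrow> q y \<le> q m0"
    using continuous_attains_sup[OF compact_Icc _ cont] s by fastforce
  define M where "M = q m0"
  define K where "K = {y \<in> {\<alpha>..\<beta>}. q y = M}"
  have Kne: "K \<noteq> {}" using m0 by (auto simp: K_def M_def)
  have Kc: "closed K"
  proof -
    have "K = {\<alpha>..\<beta>} \<inter> q -` {M}" by (auto simp: K_def)
    moreover have "closedin (top_of_set {\<alpha>..\<beta>}) ({\<alpha>..\<beta>} \<inter> q -` {M})"
      by (rule continuous_closedin_preimage[OF cont]) simp
    ultimately show ?thesis using closedin_closed_trans by fastforce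
  qed
  have Kb: "bdd_below K" by (auto simp: K_def bdd_below_def)
  define m where "m = Inf K"
  have mK: "m \<in> K" unfolding m_def by (rule closed_contains_Inf[OF Kne Kb Kc])
  have Mpos: "M > 0" using mx[OF s] qs by (simp add: M_def)
  have mne: "m \<noteq> \<alpha>" "m \<noteq> \<beta>" using mK qa qb Mpos by (auto simp: K_def)
  hence mi: "m \<in> {\<alpha><..<\<beta>}" using mK by (auto simp: K_def)
  obtain r0 where r0: "r0 > 0" and r0p: "\<And>r. 0 < r \<Longrightarrow> r < r0 \<Longrightarrow> ((\<lambda>t. q (m + r * cos (2 * pi * t))) has_integral q m) {0..1}"
    using mv[OF mi] unfolding mvprop_def by blast
  define r where "r = min r0 (min (m - \<alpha>) (\<beta> - m)) / 2"
  have r: "0 < r" "r < r0" "r \<le> m - \<alpha>" "r \<le> \<beta> - m" using r0 mi by (auto simp: r_def)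
  have int: "((\<lambda>t. q (m + r * cos (2 * pi * t))) has_integral M) {0..1}"
    using r0p[OF r(1,2)] mK by (simp add: K_def)
  have "((\<lambda>t. M - q (m + r * cos (2 * pi * t))) has_integral (M - M)) {0..1}"
    using has_integral_diff[OF has_integral_const_real[of M 0 1] int] by simp
  hence int0: "((\<lambda>t. M - q (m + r * cos (2 * pi * t))) has_integral 0) (cbox 0 1)" by simp
  have inI: "m + r * cos (2 * pi * t) \<in> {\<alpha>..\<beta>}" for t
  proof -
    have "r * cos (2*pi*t) \<le> r * 1" by (rule mult_left_mono) (use r in auto)
    moreover have "r * (-1) \<le> r * cos (2*pi*t)" by (rule mult_left_mono) (use r in auto)
    ultimately show ?thesis using r unfolding atLeastAtMost_iff by linarith
  qed
  have contI: "continuous_on (cbox 0 1) (\<lambda>t. M - q (m + r * cos (2 * pi * t)))"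
    by (intro continuous_intros continuous_on_compose2[OF cont]) (use inI in auto)
  have "M - q (m + r * cos (2 * pi * (1/2))) = 0"
    by (rule has_integral_0_cbox_imp_0[OF contI _ int0]) (use mx[OF inI] in \<open>auto simp: M_def\<close>)
  hence "q (m - r) = M" by simp
  hence "m - r \<in> K" using inI[of "1/2"] by (simp add: K_def)
  hence "m \<le> m - r" unfolding m_def using Kb by (rule cInf_lower)
  thus False using r by simp
qed

lemma cos_int0: "((\<lambda>t. cos (2 * pi * t)) has_integral 0) {0..1::real}"
proof -
  have "((\<lambda>t. cos (2 * pi * t)) has_integral (sin (2 * pi * 1) / (2 * pi) - sin (2 * pi * 0) / (2 * pi))) {0..1::real}"
    by (rule fundamental_theorem_of_calculus) (auto intro!: derivative_eq_intros simp: has_real_derivative_iff_has_vector_derivative[symmetric])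
  thus ?thesis by simp
qed

lemma mv_affine:
  fixes g :: "real \<Rightarrow> real"
  assumes cont: "continuous_on {\<alpha>..\<beta>} g" and ab: "\<alpha> < \<beta>"
    and mv: "\<And>s. s \<in> {\<alpha><..<\<beta>} \<Longrightarrow> mvprop g s"
    and s: "s \<in> {\<alpha>..\<beta>}"
  shows "g s = g \<alpha> + (s - \<alpha>) / (\<beta> - \<alpha>) * (g \<beta> - g \<alpha>)"
proof -
  define c where "c = (g \<beta> - g \<alpha>) / (\<beta> - \<alpha>)"
  define l where "l s = g \<alpha> + (s - \<alpha>) * c" for s
  have lint: "((\<lambda>t. l (s + r * cos (2 * pi * t))) has_integral l s) {0..1}" for s r
  proof -
    have "((\<lambda>t. l s + (r * c) * cos (2 * pi * t)) has_integral (l s + (r * c) * 0)) {0..1}"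
      using has_integral_add[OF has_integral_const_real[of "l s" 0 1] has_integral_mult_right[OF cos_int0, of "r * c"]]
      by simp
    thus ?thesis by (simp add: l_def algebra_simps)
  qed
  have mvq: "mvprop (\<lambda>s. g s - l s) s" "mvprop (\<lambda>s. l s - g s) s" if sI: "s \<in> {\<alpha><..<\<beta>}" for s
  proof -
    obtain r0 where "r0 > 0" and r0p: "\<And>r. 0 < r \<Longrightarrow> r < r0 \<Longrightarrow> ((\<lambda>t. g (s + r * cos (2 * pi * t))) has_integral g s) {0..1}"
      using mv[OF sI] unfolding mvprop_def by blast
    thus "mvprop (\<lambda>s. g s - l s) s" "mvprop (\<lambda>s. l s - g s) s"
      unfolding mvprop_def using has_integral_diff[OF r0p lint] has_integral_diff[OF lint r0p] by blast+
  qed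
  have cl: "continuous_on {\<alpha>..\<beta>} l" unfolding l_def by (intro continuous_intros)
  have "g s - l s \<le> 0"
    by (rule max_principle[where q="\<lambda>s. g s - l s", OF continuous_on_diff[OF cont cl] _ _ mvq(1) s])
       (use ab in \<open>simp_all add: l_def c_def\<close>)
  moreover have "l s - g s \<le> 0"
    by (rule max_principle[where q="\<lambda>s. l s - g s", OF continuous_on_diff[OF cl cont] _ _ mvq(2) s])
       (use ab in \<open>simp_all add: l_def c_def\<close>)
  ultimately have "g s = l s" by simp
  thus ?thesis by (simp add: l_def c_def)
qed


lemma arith_half: "(A::real) = B + 1/2 * (C - B) \<Longrightarrow> A - X = (B - X + (C - X)) / 2"
  by (simp add: field_simps)

context
  fixes \<Omega> :: "(real^'n) set" and R :: "real^'n \<Rightarrow> real"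
  assumes op: "open \<Omega>" and cR: "continuous_on \<Omega> R"
    and mv: "\<And>x a. x \<in> \<Omega> \<Longrightarrow> mvprop (\<lambda>s. R (x + s *\<^sub>R a)) 0"
begin

lemma mv_shift:
  assumes "u + s *\<^sub>R a \<in> \<Omega>"
  shows "mvprop (\<lambda>s'. R (u + s' *\<^sub>R a)) s"
proof -
  have "mvprop (\<lambda>s'. R ((u + s *\<^sub>R a) + s' *\<^sub>R a)) 0" by (rule mv[OF assms])
  moreover have "(u + s *\<^sub>R a) + c *\<^sub>R a = u + (s + c) *\<^sub>R a" for c
    by (simp add: algebra_simps)
  ultimately show ?thesis unfolding mvprop_def by simp
qed

lemma seg_affine:
  assumes seg: "closed_segment u v \<subseteq> \<Omega>" and l: "l \<in> {0..1}"
  shows "R (u + l *\<^sub>R (v - u)) = R u + l * (R v - R u)"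
proof -
  define g where "g = (\<lambda>s. R (u + s *\<^sub>R (v - u)))"
  have inseg: "u + s *\<^sub>R (v - u) \<in> \<Omega>" if "s \<in> {0..1}" for s
  proof -
    have "u + s *\<^sub>R (v - u) = (1 - s) *\<^sub>R u + s *\<^sub>R v" by (simp add: algebra_simps)
    also have "\<dots> \<in> closed_segment u v" using that by (auto simp: closed_segment_def)
    finally show ?thesis using seg by blast
  qed
  have cg: "continuous_on {0..1} g" unfolding g_def
    by (intro continuous_on_compose2[OF cR] continuous_intros) (use inseg in auto)
  have mvg: "mvprop g s" if "s \<in> {0<..<1}" for s
    unfolding g_def by (rule mv_shift) (use inseg that in auto)
  have "g l = g 0 + (l - 0) / (1 - 0) * (g 1 - g 0)"
    by (rule mv_affine[OF cg _ mvg l]) simp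
  thus ?thesis by (simp add: g_def)
qed

lemma local_linear:
  assumes x: "x \<in> \<Omega>"
  shows "\<exists>a \<eta>. \<eta> > 0 \<and> (\<forall>w. norm w < \<eta> \<longrightarrow> R (x + w) = R x + a \<bullet> w)"
proof -
  obtain \<delta> where d: "\<delta> > 0" and bd: "ball x \<delta> \<subseteq> \<Omega>" using op x open_contains_ball by blast
  define \<phi> where "\<phi> v = R (x + v) - R x" for v
  have segb: "closed_segment (x + v) (x + w) \<subseteq> \<Omega>" if "norm v < \<delta>" "norm w < \<delta>" for v w
  proof -
    have "x + v \<in> ball x \<delta>" "x + w \<in> ball x \<delta>" using that by (auto simp: dist_norm)
    hence "closed_segment (x + v) (x + w) \<subseteq> ball x \<delta>" by (intro closed_segment_subset convex_ball)
    thus ?thesis using bd by blast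
  qed
  have P1: "\<phi> (l *\<^sub>R v) = l * \<phi> v" if "norm v < \<delta>" "l \<in> {0..1}" for v l
    using seg_affine[OF segb[of 0 v] that(2)] that d by (simp add: \<phi>_def algebra_simps)
  have P2: "\<phi> (- v) = - \<phi> v" if "norm v < \<delta>" for v
  proof -
    have sg: "closed_segment (x + - v) (x + v) \<subseteq> \<Omega>" using segb[of "-v" v] that by simp
    have "R ((x + - v) + (1/2) *\<^sub>R ((x + v) - (x + - v))) = R (x + - v) + (1/2) * (R (x + v) - R (x + - v))"
      by (rule seg_affine[OF sg]) simp
    moreover have "(x + - v) + (1/2) *\<^sub>R ((x + v) - (x + - v)) = x" by (simp add: vec_eq_iff field_simps)
    ultimately show ?thesis by (simp add: \<phi>_def algebra_simps)
  qed
  have P3: "\<phi> ((1/2) *\<^sub>R (v + w)) = (\<phi> v + \<phi> w) / 2" if "norm v < \<delta>" "norm w < \<delta>" for v w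
  proof -
    have h: "R ((x + v) + (1/2) *\<^sub>R ((x + w) - (x + v))) = R (x + v) + (1/2) * (R (x + w) - R (x + v))"
      by (rule seg_affine[OF segb[OF that]]) simp
    have e: "(x + v) + (1/2) *\<^sub>R ((x + w) - (x + v)) = x + (1/2) *\<^sub>R (v + w)" by (simp add: vec_eq_iff field_simps)
    have "R (x + (1/2) *\<^sub>R (v + w)) = R (x + v) + (1/2) * (R (x + w) - R (x + v))" using h unfolding e .
    thus ?thesis unfolding \<phi>_def by (rule arith_half)
  qed
  have add: "\<phi> (v + w) = \<phi> v + \<phi> w" if "norm v < \<delta>" "norm w < \<delta>" "norm (v + w) < \<delta>" for v w
    using P1[OF that(3), of "1/2"] P3[OF that(1,2)] by simp
  have sc: "\<phi> (t *\<^sub>R v) = t * \<phi> v" if "norm v < \<delta>" "\<bar>t\<bar> \<le> 1" for v t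
  proof (cases "t \<ge> 0")
    case True thus ?thesis using P1[OF that(1)] that(2) by simp
  next
    case False
    have "norm ((- t) *\<^sub>R v) < \<delta>"
    proof -
      have "norm ((- t) *\<^sub>R v) = \<bar>t\<bar> * norm v" by simp
      also have "\<dots> \<le> norm v" using that(2) by (simp add: mult_left_le_one_le)
      finally show ?thesis using that(1) by simp
    qed
    hence "\<phi> (- ((- t) *\<^sub>R v)) = - \<phi> ((- t) *\<^sub>R v)" by (rule P2)
    thus ?thesis using P1[OF that(1), of "-t"] False that(2) by simp
  qed
  define \<epsilon> where "\<epsilon> = \<delta> / 2"
  have e: "\<epsilon> > 0" "\<epsilon> < \<delta>" using d by (auto simp: \<epsilon>_def)
  define a where "a = (\<Sum>b\<in>Basis. (\<phi> (\<epsilon> *\<^sub>R b) / \<epsilon>) *\<^sub>R b)"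
  define \<eta> where "\<eta> = \<epsilon> / (real DIM(real^'n) + 1)"
  have eta: "\<eta> > 0" using e by (simp add: \<eta>_def)
  have eta1: "(real DIM(real^'n) + 1) * \<eta> = \<epsilon>" by (simp add: \<eta>_def)
  have eta2: "real DIM(real^'n) * \<eta> < \<epsilon>"
  proof -
    have "real DIM(real^'n) * \<eta> < (real DIM(real^'n) + 1) * \<eta>" using eta by (simp add: distrib_right)
    thus ?thesis using eta1 by simp
  qed
  have eta3: "\<eta> \<le> \<epsilon>"
  proof -
    have "1 * \<eta> \<le> (real DIM(real^'n) + 1) * \<eta>" by (rule mult_right_mono) (use eta in auto)
    thus ?thesis using eta1 by simp
  qed
  have main: "\<phi> (\<Sum>b\<in>S. (w \<bullet> b) *\<^sub>R b) = (\<Sum>b\<in>S. (w \<bullet> b) * (\<phi> (\<epsilon> *\<^sub>R b) / \<epsilon>))"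
    if w: "norm w < \<eta>" and S: "S \<subseteq> Basis" for w S
  proof -
    have fS: "finite S" by (rule finite_subset[OF S finite_Basis])
    have nb: "norm (\<Sum>b\<in>T. (w \<bullet> b) *\<^sub>R b) < \<delta>" if "T \<subseteq> Basis" for T
    proof -
      have "norm (\<Sum>b\<in>T. (w \<bullet> b) *\<^sub>R b) \<le> (\<Sum>b\<in>T. norm ((w \<bullet> b) *\<^sub>R b))" by (rule norm_sum)
      also have "\<dots> \<le> (\<Sum>b\<in>T. norm w)"
        by (rule sum_mono) (use that in \<open>auto simp: Basis_le_norm\<close>)
      also have "\<dots> = real (card T) * norm w" by simp
      also have "\<dots> \<le> real DIM(real^'n) * norm w"
        using card_mono[OF finite_Basis that] by (simp add: mult_right_mono)
      also have "\<dots> \<le> real DIM(real^'n) * \<eta>" using w by (simp add: mult_left_mono)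
      also have "\<dots> < \<epsilon>" by (rule eta2)
      finally show ?thesis using e by simp
    qed
    from fS S show ?thesis
    proof (induction S)
      case empty show ?case by (simp add: \<phi>_def)
    next
      case (insert c S)
      have cB: "c \<in> Basis" and SB: "S \<subseteq> Basis" using insert by auto
      have nc: "norm ((w \<bullet> c) *\<^sub>R c) < \<delta>" using nb[of "{c}"] cB by simp
      have "\<phi> (\<Sum>b\<in>insert c S. (w \<bullet> b) *\<^sub>R b) = \<phi> ((w \<bullet> c) *\<^sub>R c + (\<Sum>b\<in>S. (w \<bullet> b) *\<^sub>R b))"
        using insert by simp
      also have "\<dots> = \<phi> ((w \<bullet> c) *\<^sub>R c) + \<phi> (\<Sum>b\<in>S. (w \<bullet> b) *\<^sub>R b)"
        by (rule add[OF nc nb[OF SB]]) (use nb[of "insert c S"] insert in simp)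
      also have "\<phi> ((w \<bullet> c) *\<^sub>R c) = (w \<bullet> c) * (\<phi> (\<epsilon> *\<^sub>R c) / \<epsilon>)"
      proof -
        have "\<bar>w \<bullet> c\<bar> \<le> norm w" using cB by (simp add: Basis_le_norm)
        also have "\<dots> \<le> \<epsilon>" using w eta3 by simp
        finally have t1: "\<bar>(w \<bullet> c) / \<epsilon>\<bar> \<le> 1" using e by (simp add: abs_div)
        have n1: "norm (\<epsilon> *\<^sub>R c) < \<delta>" using cB e by simp
        have "\<phi> (((w \<bullet> c) / \<epsilon>) *\<^sub>R (\<epsilon> *\<^sub>R c)) = ((w \<bullet> c) / \<epsilon>) * \<phi> (\<epsilon> *\<^sub>R c)"
          by (rule sc[OF n1 t1])
        thus ?thesis using e by simp
      qed
      finally show ?case using insert by simp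
    qed
  qed
  show ?thesis
  proof (intro exI conjI allI impI)
    show "\<eta> > 0" by (rule eta)
    fix w :: "real^'n" assume w: "norm w < \<eta>"
    have "\<phi> w = (\<Sum>b\<in>Basis. (w \<bullet> b) * (\<phi> (\<epsilon> *\<^sub>R b) / \<epsilon>))"
      using main[OF w order_refl] by (simp add: euclidean_representation)
    also have "\<dots> = a \<bullet> w" unfolding a_def inner_sum_left by (rule sum.cong) (simp_all add: inner_commute mult.commute)
    finally show "R (x + w) = R x + a \<bullet> w" by (simp add: \<phi>_def)
  qed
qed

definition "lprop x a \<longleftrightarrow> (\<exists>\<eta>>0. \<forall>w. norm w < \<eta> \<longrightarrow> R (x + w) = R x + a \<bullet> w)"

lemma lprop_uniq:
  assumes "lprop x a" "lprop x a'" shows "a = a'"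
proof (rule ccontr)
  assume ne: "a \<noteq> a'"
  obtain \<eta> where "\<eta> > 0" and h: "\<And>w. norm w < \<eta> \<Longrightarrow> R (x + w) = R x + a \<bullet> w" using assms(1) lprop_def by blast
  obtain \<eta>' where "\<eta>' > 0" and h': "\<And>w. norm w < \<eta>' \<Longrightarrow> R (x + w) = R x + a' \<bullet> w" using assms(2) lprop_def by blast
  define d where "d = a - a'"
  have dn: "norm d > 0" using ne by (simp add: d_def)
  define c where "c = min \<eta> \<eta>' / 2 / norm d"
  have c: "c > 0" using \<open>\<eta> > 0\<close> \<open>\<eta>' > 0\<close> dn by (simp add: c_def)
  define w where "w = c *\<^sub>R d"
  have nw: "norm w = min \<eta> \<eta>' / 2" using dn c \<open>\<eta> > 0\<close> \<open>\<eta>' > 0\<close> by (simp add: w_def c_def)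
  have "a \<bullet> w = a' \<bullet> w" using h[of w] h'[of w] nw \<open>\<eta> > 0\<close> \<open>\<eta>' > 0\<close> by simp
  hence "d \<bullet> w = 0" by (simp add: d_def inner_diff_left)
  hence "c * (d \<bullet> d) = 0" by (simp add: w_def)
  thus False using c dn by simp
qed

lemma affine_component:
  assumes C: "C \<in> components \<Omega>"
  shows "\<exists>a b. \<forall>x\<in>C. R x = a \<bullet> x + b"
proof -
  define A where "A x = (SOME a. lprop x a)" for x
  have PA: "lprop x (A x)" if "x \<in> \<Omega>" for x
    unfolding A_def by (rule someI_ex) (use local_linear[OF that] in \<open>auto simp: lprop_def\<close>)
  have Co: "open C" using open_components[OF op C] .
  have Cc: "connected C" using in_components_connected[OF C] .
  have CO: "C \<subseteq> \<Omega>" using in_components_subset[OF C] .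
  define \<Phi> where "\<Phi> x = (A x, R x - A x \<bullet> x)" for x
  have "\<Phi> constant_on C"
  proof (rule locally_constant_imp_constant[OF Cc])
    fix x assume xC: "x \<in> C"
    obtain \<eta> where eta: "\<eta> > 0" and H: "\<And>w. norm w < \<eta> \<Longrightarrow> R (x + w) = R x + A x \<bullet> w"
      using PA[of x] xC CO lprop_def by blast
    define T where "T = C \<inter> ball x \<eta>"
    have "openin (top_of_set C) T" unfolding T_def by (rule openin_open_Int) simp
    moreover have "x \<in> T" using xC eta by (simp add: T_def)
    moreover have "\<Phi> y = \<Phi> x" if yT: "y \<in> T" for y
    proof -
      have dy: "norm (y - x) < \<eta>" using yT by (simp add: T_def dist_norm norm_minus_commute)
      have Ry: "R y = R x + A x \<bullet> (y - x)" using H[OF dy] by simp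
      have "lprop y (A x)" unfolding lprop_def
      proof (intro exI conjI allI impI)
        show "\<eta> - norm (y - x) > 0" using dy by simp
        fix w :: "real^'n" assume "norm w < \<eta> - norm (y - x)"
        hence "norm ((y - x) + w) < \<eta>" using norm_triangle_ineq[of "y - x" w] by simp
        hence "R (x + ((y - x) + w)) = R x + A x \<bullet> ((y - x) + w)" by (rule H)
        thus "R (y + w) = R y + A x \<bullet> w" using Ry by (simp add: inner_add_right algebra_simps)
      qed
      hence "A y = A x" using lprop_uniq PA[of y] yT CO T_def by blast
      thus ?thesis using Ry by (simp add: \<Phi>_def inner_diff_right)
    qed
    ultimately show "\<exists>T. openin (top_of_set C) T \<and> x \<in> T \<and> (\<forall>y\<in>T. \<Phi> y = \<Phi> x)" by blast
  qed
  then obtain v where v: "\<And>x. x \<in> C \<Longrightarrow> \<Phi> x = v" unfolding constant_on_def by blast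
  show ?thesis
  proof (intro exI ballI)
    fix x assume "x \<in> C"
    hence "A x = fst v" "R x - A x \<bullet> x = snd v" using v[of x] by (auto simp: \<Phi>_def)
    thus "R x = fst v \<bullet> x + snd v" by simp
  qed
qed

end

lemma sets_pair_borel:
  assumes "sets M = sets (borel :: ('a::second_countable_topology) measure)"
    and "sets N = sets (borel :: ('b::second_countable_topology) measure)"
  shows "sets (M \<Otimes>\<^sub>M N) = sets (borel :: ('a \<times> 'b) measure)"
proof -
  have "sets (M \<Otimes>\<^sub>M N) = sets (borel \<Otimes>\<^sub>M borel :: ('a \<times> 'b) measure)" by (rule sets_pair_measure_cong) fact+
  also have "\<dots> = sets borel" by (metis borel_prod)
  finally show ?thesis .
qed

lemma abs_bound_compact:
  fixes g :: "'a::topological_space \<Rightarrow> real"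
  assumes "compact K" "continuous_on K g"
  shows "\<exists>B. \<forall>q\<in>K. \<bar>g q\<bar> \<le> B"
proof -
  have "bounded (g ` K)" using compact_continuous_image[OF assms(2,1)] compact_imp_bounded by blast
  then obtain B where "\<forall>y\<in>g ` K. norm y \<le> B" unfolding bounded_iff by blast
  thus ?thesis by auto
qed

context
  fixes \<mu> :: "(complex^'n^'n) measure"
  assumes H: "haar_unitary \<mu>"
begin

lemma HP: "prob_space \<mu>" by (rule H_prob[OF H])

lemma sets_mu_lborel: "sets (\<mu> \<Otimes>\<^sub>M lborel) = sets (borel :: ((complex^'n^'n) \<times> real) measure)"
  by (rule sets_pair_borel) (simp_all add: H_sets[OF H])

lemma sets_borel_mu: "sets ((borel :: 'a::second_countable_topology measure) \<Otimes>\<^sub>M \<mu>) = sets (borel :: ('a \<times> (complex^'n^'n)) measure)"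
  by (rule sets_pair_borel) (simp_all add: H_sets[OF H])

lemma int_bounded:
  fixes g :: "complex^'n^'n \<Rightarrow> real"
  assumes "g \<in> borel_measurable borel" "\<And>U. \<bar>g U\<bar> \<le> B"
  shows "integrable \<mu> g"
proof -
  interpret prob_space \<mu> by (rule HP)
  show ?thesis
    by (rule integrable_const_bound[where B=B]) (use assms in \<open>simp_all add: H_meas_iff[OF H]\<close>)
qed

lemma abs_int_le:
  fixes g :: "complex^'n^'n \<Rightarrow> real"
  assumes "integrable \<mu> g" "\<And>U. \<bar>g U\<bar> \<le> B"
  shows "\<bar>integral\<^sup>L \<mu> g\<bar> \<le> B"
proof -
  interpret prob_space \<mu> by (rule HP)
  have "\<bar>integral\<^sup>L \<mu> g\<bar> \<le> (\<integral>U. \<bar>g U\<bar> \<partial>\<mu>)" by (rule integral_abs_bound)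
  also have "\<dots> \<le> (\<integral>U. B \<partial>\<mu>)"
    by (rule integral_mono) (use assms in auto)
  also have "\<dots> = B" by (simp add: prob_space)
  finally show ?thesis .
qed

lemma inner_meas:
  fixes G :: "'a::second_countable_topology \<Rightarrow> complex^'n^'n \<Rightarrow> real"
  assumes "(\<lambda>q. G (fst q) (snd q)) \<in> borel_measurable borel"
  shows "(\<lambda>x. \<integral>V. G x V \<partial>\<mu>) \<in> borel_measurable borel"
proof -
  interpret prob_space \<mu> by (rule HP)
  have "(\<lambda>(x, y). G x y) \<in> borel_measurable (borel \<Otimes>\<^sub>M \<mu>)"
    using assms by (subst measurable_cong_sets[OF sets_borel_mu refl]) (simp add: case_prod_beta)
  thus ?thesis by (rule borel_measurable_lebesgue_integral)
qed

lemma fub_t: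
  fixes G :: "complex^'n^'n \<Rightarrow> real \<Rightarrow> real"
  assumes m: "(\<lambda>q. G (fst q) (snd q)) \<in> borel_measurable borel"
    and b: "\<And>U t. \<bar>G U t\<bar> \<le> B * indicator {0..1} t"
  shows "(\<integral>U. (\<integral>t. G U t \<partial>lborel) \<partial>\<mu>) = (\<integral>t. (\<integral>U. G U t \<partial>\<mu>) \<partial>lborel)"
proof -
  interpret M: prob_space \<mu> by (rule HP)
  interpret P: pair_sigma_finite \<mu> lborel by unfold_locales
  have B0: "B \<ge> 0" using b[of undefined 0] by simp
  have mI: "(\<lambda>(x, y). G x y) \<in> borel_measurable (\<mu> \<Otimes>\<^sub>M lborel)"
    using m by (subst measurable_cong_sets[OF sets_mu_lborel refl]) (simp add: case_prod_beta)
  have "UNIV \<in> sets \<mu>" using sets.top[of \<mu>] by (simp add: H_space[OF H])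
  moreover have "{0..1::real} \<in> sets lborel" using atLeastAtMost_borel by simp
  ultimately have sT: "UNIV \<times> {0..1::real} \<in> sets (\<mu> \<Otimes>\<^sub>M lborel)"
    by (rule pair_measureI)
  have "emeasure (\<mu> \<Otimes>\<^sub>M lborel) (UNIV \<times> {0..1::real}) = emeasure \<mu> UNIV * emeasure lborel {0..1::real}"
    by (rule lborel.emeasure_pair_measure_Times) (use sT in \<open>auto simp: H_sets[OF H] atLeastAtMost_borel\<close>)
  also have "\<dots> = 1" using M.emeasure_space_1 by (simp add: H_space[OF H])
  finally have "integrable (\<mu> \<Otimes>\<^sub>M lborel) (indicator (UNIV \<times> {0..1::real}) :: _ \<Rightarrow> real)"
    using sT by (intro integrable_real_indicator) simp_all
  hence dom: "integrable (\<mu> \<Otimes>\<^sub>M lborel) (\<lambda>z. B * indicator (UNIV \<times> {0..1::real}) z)"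
    by (rule integrable_mult_right)
  have "integrable (\<mu> \<Otimes>\<^sub>M lborel) (\<lambda>(x, y). G x y)"
  proof (rule Bochner_Integration.integrable_bound[OF dom mI])
    show "AE z in \<mu> \<Otimes>\<^sub>M lborel. norm ((\<lambda>(x, y). G x y) z) \<le> norm (B * indicator (UNIV \<times> {0..1::real}) z)"
    proof (rule AE_I2)
      fix z :: "(complex^'n^'n) \<times> real"
      obtain U t where z: "z = (U, t)" by (cases z)
      have "\<bar>G U t\<bar> \<le> B * indicator {0..1} t" by (rule b)
      thus "norm ((\<lambda>(x, y). G x y) z) \<le> norm (B * indicator (UNIV \<times> {0..1::real}) z)"
        using B0 by (simp add: z indicator_def)
    qed
  qed
  from P.Fubini_integral[OF this] show ?thesis by simp
qed

end

lemma cvec_cont: "continuous_on S xf \<Longrightarrow> continuous_on S (\<lambda>q. cvec (xf q))"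
  unfolding cvec_def by (intro continuous_on_vec_lambda continuous_intros cont_nth)

lemma p_cont:
  assumes p: "poly_fun p" and cU: "continuous_on S Uf" and cV: "continuous_on S Vf" and cz: "continuous_on S zf"
  shows "continuous_on S (\<lambda>q. p (Uf q ** EZ (zf q) ** cadj (Vf q)))"
proof -
  have e: "continuous_on S (\<lambda>w. (Uf w ** EZ (zf w) ** cadj (Vf w)) $ i $ j)" for i j
    unfolding entry_UEV by (intro continuous_intros cont_nth[OF cont_nth[OF cU]] cont_nth[OF cont_nth[OF cV]] cont_nth[OF cz])
  show ?thesis by (rule poly_fun_cont[OF p e])
qed

lemma Fz_meas:
  assumes p: "poly_fun p" and cU: "continuous_on UNIV Uf" and cV: "continuous_on UNIV Vf" and cz: "continuous_on UNIV zf"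
  shows "(\<lambda>q. ln (cmod (Fz p k (Uf q) (Vf q) (zf q)))) \<in> borel_measurable borel"
proof -
  have e: "continuous_on UNIV (\<lambda>w. (Uf w ** EZ (zf w) ** cadj (Vf w)) $ i $ j)" for i j
    unfolding entry_UEV by (intro continuous_intros cont_nth[OF cont_nth[OF cU]] cont_nth[OF cont_nth[OF cV]] cont_nth[OF cz])
  have m1[measurable]: "(\<lambda>q. p (Uf q ** EZ (zf q) ** cadj (Vf q))) \<in> borel_measurable borel"
    by (rule borel_measurable_continuous_onI[OF poly_fun_cont[OF p e]])
  have m2[measurable]: "(\<lambda>q. det (Uf q ** EZ (zf q) ** cadj (Vf q))) \<in> borel_measurable borel"
    by (rule borel_measurable_continuous_onI[OF det_cont[OF e]])
  show ?thesis unfolding Fz_def by measurable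
qed

lemma ind_meas:
  assumes "continuous_on UNIV Uf"
  shows "(\<lambda>q. indicator unitary_group (Uf q) :: real) \<in> borel_measurable borel"
  using measurable_compose[OF borel_measurable_continuous_onI[OF assms] borel_measurable_indicator[OF borel_unitary]]
  by (simp add: o_def)

definition "II \<mu> G = (\<integral>U. (\<integral>V. G U V \<partial>\<mu>) \<partial>\<mu>)"

context
  fixes \<mu> :: "(complex^'n^'n) measure"
  assumes H: "haar_unitary \<mu>"
begin

definition "mb G \<longleftrightarrow> (\<lambda>q::(complex^'n^'n) \<times> (complex^'n^'n). G (fst q) (snd q) :: real) \<in> borel_measurable borel"

lemma mb_in1: "mb G \<Longrightarrow> (G U) \<in> borel_measurable borel"
proof -
  assume "mb G"
  hence m: "(\<lambda>q::(complex^'n^'n) \<times> (complex^'n^'n). G (fst q) (snd q)) \<in> borel_measurable borel" by (simp add: mb_def)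
  have c: "(\<lambda>V::complex^'n^'n. (U, V)) \<in> measurable borel borel"
    by (rule borel_measurable_continuous_onI) (intro continuous_intros)
  show ?thesis using measurable_compose[OF c m] by (simp add: o_def)
qed

lemma II_integrable:
  assumes m: "mb G" and b: "\<And>U V. \<bar>G U V\<bar> \<le> B"
  shows "integrable \<mu> (G U)" "integrable \<mu> (\<lambda>U. \<integral>V. G U V \<partial>\<mu>)" "\<bar>\<integral>V. G U V \<partial>\<mu>\<bar> \<le> B"
proof -
  show i1: "integrable \<mu> (G U)" for U by (rule int_bounded[OF H mb_in1[OF m] b])
  show b1: "\<bar>\<integral>V. G U V \<partial>\<mu>\<bar> \<le> B" for U by (rule abs_int_le[OF H i1 b])
  have "(\<lambda>U. \<integral>V. G U V \<partial>\<mu>) \<in> borel_measurable borel"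
    by (rule inner_meas[OF H]) (use m in \<open>simp add: mb_def\<close>)
  thus "integrable \<mu> (\<lambda>U. \<integral>V. G U V \<partial>\<mu>)" by (rule int_bounded[OF H _ b1])
qed

lemma II_bound:
  assumes m: "mb G" and b: "\<And>U V. \<bar>G U V\<bar> \<le> B"
  shows "\<bar>II \<mu> G\<bar> \<le> B"
  unfolding II_def by (rule abs_int_le[OF H II_integrable(2)[OF m b] II_integrable(3)[OF m b]])

lemma II_diff:
  assumes m1: "mb G1" and b1: "\<And>U V. \<bar>G1 U V\<bar> \<le> B1"
    and m2: "mb G2" and b2: "\<And>U V. \<bar>G2 U V\<bar> \<le> B2"
  shows "II \<mu> (\<lambda>U V. G1 U V - G2 U V) = II \<mu> G1 - II \<mu> G2"
proof -
  have "II \<mu> (\<lambda>U V. G1 U V - G2 U V) = (\<integral>U. (\<integral>V. G1 U V \<partial>\<mu>) - (\<integral>V. G2 U V \<partial>\<mu>) \<partial>\<mu>)"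
  proof -
    have "(\<integral>V. G1 U V - G2 U V \<partial>\<mu>) = (\<integral>V. G1 U V \<partial>\<mu>) - (\<integral>V. G2 U V \<partial>\<mu>)" for U
      by (rule Bochner_Integration.integral_diff) (rule II_integrable[OF m1 b1], rule II_integrable[OF m2 b2])
    thus ?thesis unfolding II_def by simp
  qed
  also have "\<dots> = II \<mu> G1 - II \<mu> G2"
    unfolding II_def by (rule Bochner_Integration.integral_diff) (rule II_integrable[OF m1 b1], rule II_integrable[OF m2 b2])
  finally show ?thesis .
qed

lemma II_nn:
  assumes m: "mb G" and b: "\<And>U V. \<bar>G U V\<bar> \<le> B" and nn: "\<And>U V. G U V \<ge> 0"
  shows "(\<integral>\<^sup>+U. (\<integral>\<^sup>+V. ennreal (G U V) \<partial>\<mu>) \<partial>\<mu>) = ennreal (II \<mu> G)"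
proof -
  have "(\<integral>\<^sup>+U. (\<integral>\<^sup>+V. ennreal (G U V) \<partial>\<mu>) \<partial>\<mu>) = (\<integral>\<^sup>+U. ennreal (\<integral>V. G U V \<partial>\<mu>) \<partial>\<mu>)"
    by (rule nn_integral_cong, rule nn_integral_eq_integral) (use II_integrable[OF m b] nn in auto)
  also have "\<dots> = ennreal (II \<mu> G)"
    unfolding II_def by (rule nn_integral_eq_integral) (use II_integrable[OF m b] nn in \<open>auto intro: integral_nonneg_AE\<close>)
  finally show ?thesis .
qed

end

lemma e2m: "e2ennreal (max 0 (ereal r)) = ennreal (max 0 r)"
  by (subst ereal_max_0) (rule e2ennreal_ereal)

lemma e2m': "e2ennreal (max 0 (- ereal r)) = ennreal (max 0 (- r))"
  using e2m[of "-r"] by simp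

lemma unitary_nonempty: "(mat 1 :: complex^'n^'n) \<in> unitary_group" by (rule unitary_mat1)

lemma open_Om:
  fixes p :: "complex^'n^'n \<Rightarrow> complex"
  assumes p: "poly_fun p"
  shows "open (Om p k :: (real^'n) set)"
proof -
  define S where "S = (unitary_group :: (complex^'n^'n) set) \<times> (unitary_group :: (complex^'n^'n) set)"
  define T where "T = {(q :: (complex^'n^'n) \<times> (complex^'n^'n), x::real^'n). p (fst q ** EZ (cvec x) ** cadj (snd q)) = 0}"
  have cS: "compact S" unfolding S_def by (intro compact_Times compact_unitary)
  have cT: "closed T"
  proof -
    have "continuous_on UNIV (\<lambda>z::((complex^'n^'n) \<times> (complex^'n^'n)) \<times> (real^'n). p (fst (fst z) ** EZ (cvec (snd z)) ** cadj (snd (fst z))))"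
      by (intro p_cont[OF p] cvec_cont continuous_intros)
    hence "closed {z::((complex^'n^'n) \<times> (complex^'n^'n)) \<times> (real^'n). p (fst (fst z) ** EZ (cvec (snd z)) ** cadj (snd (fst z))) = 0}"
      by (intro closed_Collect_eq) (auto intro: continuous_intros)
    moreover have "T = {z. p (fst (fst z) ** EZ (cvec (snd z)) ** cadj (snd (fst z))) = 0}"
      by (auto simp: T_def)
    ultimately show ?thesis by simp
  qed
  have "closed {x. \<exists>q. q \<in> S \<and> (q, x) \<in> T}" by (rule closed_compact_projection[OF cS cT])
  moreover have "- Om p k = {x. \<exists>q. q \<in> S \<and> (q, x) \<in> T}"
  proof -
    have "Fz p k U V (cvec x) = 0 \<longleftrightarrow> p (U ** EZ (cvec x) ** cadj V) = 0"
      if "U \<in> unitary_group" "V \<in> unitary_group" for U V and x :: "real^'n"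
      using det_EZ[OF that] by (simp add: Fz_def)
    thus ?thesis by (auto simp: Om_def S_def T_def)
  qed
  ultimately have "closed (- Om p k)" by simp
  thus ?thesis by (simp add: closed_def)
qed

lemma sA_sub_Om:
  fixes f p :: "complex^'n^'n \<Rightarrow> complex"
  assumes fp: "\<And>A. det A \<noteq> 0 \<Longrightarrow> f A = p A / det A ^ k"
  shows "UNIV - sA f \<subseteq> Om p k"
proof
  fix x assume x: "x \<in> UNIV - sA f"
  show "x \<in> Om p k" unfolding Om_def
  proof (intro CollectI ballI notI)
    fix U V :: "complex^'n^'n" assume U: "U \<in> unitary_group" and V: "V \<in> unitary_group"
      and z: "Fz p k U V (cvec x) = 0"
    let ?A = "U ** exp_diag x ** cadj V"
    have d: "det ?A \<noteq> 0" using det_EZ[OF U V, of "cvec x"] by (simp add: EZ_cvec)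
    have "f ?A = 0" using z fp[OF d] by (simp add: Fz_def EZ_cvec)
    hence "x \<in> sA f" unfolding sA_def using d log_singular_unitary[OF U V] by blast
    thus False using x by simp
  qed
qed

context
  fixes \<mu> :: "(complex^'n^'n) measure" and p :: "complex^'n^'n \<Rightarrow> complex" and k :: nat
  assumes H: "haar_unitary \<mu>" and P: "poly_fun p"
begin

definition "Iu U = (indicator unitary_group U :: real)"
definition "h0 U V x = Iu U * Iu V * ln (cmod (Fz p k U V (cvec x)))"
definition "Rr x = II \<mu> (\<lambda>U V. h0 U V x)"

lemma h0_mb: "mb (\<lambda>U V. h0 U V x)"
proof -
  have m1: "(\<lambda>q::(complex^'n^'n) \<times> (complex^'n^'n). Iu (fst q)) \<in> borel_measurable borel"
    unfolding Iu_def by (rule ind_meas) (intro continuous_intros)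
  have m2: "(\<lambda>q::(complex^'n^'n) \<times> (complex^'n^'n). Iu (snd q)) \<in> borel_measurable borel"
    unfolding Iu_def by (rule ind_meas) (intro continuous_intros)
  have m3: "(\<lambda>q::(complex^'n^'n) \<times> (complex^'n^'n). ln (cmod (Fz p k (fst q) (snd q) (cvec x)))) \<in> borel_measurable borel"
    by (rule Fz_meas[OF P]) (intro continuous_intros)+
  show ?thesis unfolding mb_def[OF H] h0_def by (intro borel_measurable_times m1 m2 m3)
qed

lemma Iu_cases: "Iu U = 1 \<and> U \<in> unitary_group \<or> Iu U = 0 \<and> U \<notin> unitary_group"
  by (auto simp: Iu_def indicator_def)

lemma h0_bound:
  assumes x: "x \<in> Om p k"
  shows "\<exists>B. \<forall>U V. \<bar>h0 U V x\<bar> \<le> B"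
proof -
  let ?K = "(unitary_group :: (complex^'n^'n) set) \<times> (unitary_group :: (complex^'n^'n) set)"
  have "continuous_on ?K (\<lambda>q. Fz p k (fst q) (snd q) (cvec x))"
    by (rule Fz_cont[OF P]) (auto intro: continuous_intros)
  moreover have "\<forall>q\<in>?K. Fz p k (fst q) (snd q) (cvec x) \<noteq> 0" using x by (auto simp: Om_def)
  ultimately have "continuous_on ?K (\<lambda>q. ln (cmod (Fz p k (fst q) (snd q) (cvec x))))"
    by (intro continuous_intros) auto
  then obtain B where B: "\<forall>q\<in>?K. \<bar>ln (cmod (Fz p k (fst q) (snd q) (cvec x)))\<bar> \<le> B"
    using abs_bound_compact[OF compact_Times[OF compact_unitary compact_unitary]] by blast
  have B0: "B \<ge> 0" using B unitary_nonempty by fastforce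
  show ?thesis
  proof (intro exI allI)
    fix U V :: "complex^'n^'n"
    show "\<bar>h0 U V x\<bar> \<le> B"
      using B B0 Iu_cases[of U] Iu_cases[of V] by (auto simp: h0_def)
  qed
qed

lemma ronkin_eq:
  fixes f :: "complex^'n^'n \<Rightarrow> complex"
  assumes fp: "\<And>A. det A \<noteq> 0 \<Longrightarrow> f A = p A / det A ^ k" and x: "x \<in> Om p k"
  shows "ronkin \<mu> f x = ereal (Rr x)"
proof -
  obtain B where B: "\<And>U V. \<bar>h0 U V x\<bar> \<le> B" using h0_bound[OF x] by blast
  let ?g = "\<lambda>U V. eln_abs (f (U ** exp_diag x ** cadj V))"
  have gU: "?g U V = ereal (h0 U V x)" if U: "U \<in> unitary_group" and V: "V \<in> unitary_group" for U V
  proof -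
    have d: "det (U ** exp_diag x ** cadj V) \<noteq> 0" using det_EZ[OF U V, of "cvec x"] by (simp add: EZ_cvec)
    have "f (U ** exp_diag x ** cadj V) = Fz p k U V (cvec x)" using fp[OF d] by (simp add: Fz_def EZ_cvec)
    moreover have "Fz p k U V (cvec x) \<noteq> 0" using x U V by (auto simp: Om_def)
    ultimately show ?thesis using U V by (simp add: eln_abs_def h0_def Iu_def)
  qed
  have m0: "(\<lambda>q. h0 (fst q) (snd q) x) \<in> borel_measurable borel" using h0_mb[of x] by (simp add: mb_def[OF H])
  have mp: "mb (\<lambda>U V. max 0 (h0 U V x))" and mn: "mb (\<lambda>U V. max 0 (- h0 U V x))"
    unfolding mb_def[OF H] by (intro borel_measurable_max borel_measurable_const borel_measurable_uminus m0)+
  have bp: "\<bar>max 0 (h0 U V x)\<bar> \<le> B" and bn: "\<bar>max 0 (- h0 U V x)\<bar> \<le> B" for U V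
    using B[of U V] by auto
  have e1: "(\<integral>\<^sup>+ U. \<integral>\<^sup>+ V. e2ennreal (max 0 (?g U V)) \<partial>\<mu> \<partial>\<mu>) = (\<integral>\<^sup>+ U. \<integral>\<^sup>+ V. ennreal (max 0 (h0 U V x)) \<partial>\<mu> \<partial>\<mu>)"
  proof (rule nn_integral_cong_AE)
    show "AE U in \<mu>. (\<integral>\<^sup>+ V. e2ennreal (max 0 (?g U V)) \<partial>\<mu>) = (\<integral>\<^sup>+ V. ennreal (max 0 (h0 U V x)) \<partial>\<mu>)"
    proof (rule AE_mp[OF H_AE[OF H]], intro AE_I2 impI)
      fix U :: "complex^'n^'n" assume U: "U \<in> unitary_group"
      show "(\<integral>\<^sup>+ V. e2ennreal (max 0 (?g U V)) \<partial>\<mu>) = (\<integral>\<^sup>+ V. ennreal (max 0 (h0 U V x)) \<partial>\<mu>)"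
        by (rule nn_integral_cong_AE, rule AE_mp[OF H_AE[OF H]], intro AE_I2 impI)
           (simp only: gU[OF U] e2m)
    qed
  qed
  have e2: "(\<integral>\<^sup>+ U. \<integral>\<^sup>+ V. e2ennreal (max 0 (- ?g U V)) \<partial>\<mu> \<partial>\<mu>) = (\<integral>\<^sup>+ U. \<integral>\<^sup>+ V. ennreal (max 0 (- h0 U V x)) \<partial>\<mu> \<partial>\<mu>)"
  proof (rule nn_integral_cong_AE)
    show "AE U in \<mu>. (\<integral>\<^sup>+ V. e2ennreal (max 0 (- ?g U V)) \<partial>\<mu>) = (\<integral>\<^sup>+ V. ennreal (max 0 (- h0 U V x)) \<partial>\<mu>)"
    proof (rule AE_mp[OF H_AE[OF H]], intro AE_I2 impI)
      fix U :: "complex^'n^'n" assume U: "U \<in> unitary_group"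
      show "(\<integral>\<^sup>+ V. e2ennreal (max 0 (- ?g U V)) \<partial>\<mu>) = (\<integral>\<^sup>+ V. ennreal (max 0 (- h0 U V x)) \<partial>\<mu>)"
        by (rule nn_integral_cong_AE, rule AE_mp[OF H_AE[OF H]], intro AE_I2 impI)
           (simp only: gU[OF U] e2m')
    qed
  qed
  have n1: "(\<integral>\<^sup>+ U. \<integral>\<^sup>+ V. ennreal (max 0 (h0 U V x)) \<partial>\<mu> \<partial>\<mu>) = ennreal (II \<mu> (\<lambda>U V. max 0 (h0 U V x)))"
    by (rule II_nn[OF H mp bp]) simp
  have n2: "(\<integral>\<^sup>+ U. \<integral>\<^sup>+ V. ennreal (max 0 (- h0 U V x)) \<partial>\<mu> \<partial>\<mu>) = ennreal (II \<mu> (\<lambda>U V. max 0 (- h0 U V x)))"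
    by (rule II_nn[OF H mn bn]) simp
  have p1: "II \<mu> (\<lambda>U V. max 0 (h0 U V x)) \<ge> 0" and p2: "II \<mu> (\<lambda>U V. max 0 (- h0 U V x)) \<ge> 0"
    unfolding II_def by (auto intro!: integral_nonneg_AE AE_I2)
  have "II \<mu> (\<lambda>U V. max 0 (h0 U V x)) - II \<mu> (\<lambda>U V. max 0 (- h0 U V x)) = II \<mu> (\<lambda>U V. max 0 (h0 U V x) - max 0 (- h0 U V x))"
    by (rule II_diff[OF H mp bp mn bn, symmetric])
  also have "(\<lambda>U V. max 0 (h0 U V x) - max 0 (- h0 U V x)) = (\<lambda>U V. h0 U V x)" by (auto simp: fun_eq_iff max_def)
  finally have d: "II \<mu> (\<lambda>U V. max 0 (h0 U V x)) - II \<mu> (\<lambda>U V. max 0 (- h0 U V x)) = Rr x" by (simp add: Rr_def)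
  show ?thesis
    unfolding ronkin_def Let_def e1 e2 n1 n2 using p1 p2 d by simp
qed

end

context
  fixes \<mu> :: "(complex^'n^'n) measure" and p :: "complex^'n^'n \<Rightarrow> complex" and k :: nat
  assumes H: "haar_unitary \<mu>" and P: "poly_fun p"
begin

lemma h0_mb': "(\<lambda>q. h0 p k (fst q) (snd q) x) \<in> borel_measurable borel"
  using h0_mb[OF H P, where x=x] by (simp add: mb_def[OF H])

lemma cont_Rr: "continuous_on (Om p k) (Rr \<mu> p k)"
  unfolding continuous_on_iff
proof (intro ballI allI impI)
  fix x0 :: "real^'n" and e :: real
  assume x0: "x0 \<in> Om p k" and e: "e > 0"
  obtain d0 where d0: "d0 > 0" and cb: "cball x0 d0 \<subseteq> Om p k"
    using open_contains_cball open_Om[OF P] x0 by blast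
  define K where "K = (unitary_group :: (complex^'n^'n) set) \<times> (unitary_group :: (complex^'n^'n) set) \<times> cball x0 d0"
  define \<phi> where "\<phi> q = ln (cmod (Fz p k (fst q) (fst (snd q)) (cvec (snd (snd q)))))" for q :: "(complex^'n^'n) \<times> (complex^'n^'n) \<times> (real^'n)"
  have cK: "compact K" unfolding K_def by (intro compact_Times compact_unitary compact_cball)
  have "continuous_on K (\<lambda>q. Fz p k (fst q) (fst (snd q)) (cvec (snd (snd q))))"
    by (rule Fz_cont[OF P]) (auto simp: K_def intro!: continuous_intros cvec_cont)
  moreover have "\<forall>q\<in>K. Fz p k (fst q) (fst (snd q)) (cvec (snd (snd q))) \<noteq> 0"
    using cb by (auto simp: K_def Om_def)
  ultimately have "continuous_on K \<phi>" unfolding \<phi>_def by (intro continuous_intros) auto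
  hence "uniformly_continuous_on K \<phi>" using cK compact_uniformly_continuous by blast
  then obtain d where d: "d > 0" and ud: "\<And>q q'. q \<in> K \<Longrightarrow> q' \<in> K \<Longrightarrow> dist q' q < d \<Longrightarrow> dist (\<phi> q') (\<phi> q) < e / 2"
    unfolding uniformly_continuous_on_def using e by (metis half_gt_zero)
  show "\<exists>\<delta>>0. \<forall>x'\<in>Om p k. dist x' x0 < \<delta> \<longrightarrow> dist (Rr \<mu> p k x') (Rr \<mu> p k x0) < e"
  proof (intro exI conjI ballI impI)
    show "min d d0 > 0" using d d0 by simp
    fix x' assume x': "x' \<in> Om p k" and dx: "dist x' x0 < min d d0"
    obtain B1 where B1: "\<And>U V. \<bar>h0 p k U V x'\<bar> \<le> B1" using h0_bound[OF H P x'] by blast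
    obtain B0 where B0: "\<And>U V. \<bar>h0 p k U V x0\<bar> \<le> B0" using h0_bound[OF H P x0] by blast
    have diff: "Rr \<mu> p k x' - Rr \<mu> p k x0 = II \<mu> (\<lambda>U V. h0 p k U V x' - h0 p k U V x0)"
      unfolding Rr_def[OF H P] by (rule II_diff[OF H h0_mb[OF H P] B1 h0_mb[OF H P] B0, symmetric])
    have mbd: "mb (\<lambda>U V. h0 p k U V x' - h0 p k U V x0)"
      unfolding mb_def[OF H] by (intro borel_measurable_diff h0_mb')
    have bd: "\<bar>h0 p k U V x' - h0 p k U V x0\<bar> \<le> e / 2" for U V
    proof (cases "U \<in> unitary_group \<and> V \<in> unitary_group")
      case True
      have "(U, V, x0) \<in> K" "(U, V, x') \<in> K" using True dx d0 by (auto simp: K_def dist_commute)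
      moreover have "dist (U, V, x') (U, V, x0) < d" using dx by (simp add: dist_Pair_Pair)
      ultimately have "dist (\<phi> (U, V, x')) (\<phi> (U, V, x0)) < e / 2" by (intro ud)
      thus ?thesis using True by (simp add: h0_def[OF H P] Iu_def[OF H P] \<phi>_def dist_real_def)
    next
      case False
      thus ?thesis using e by (auto simp: h0_def[OF H P] Iu_def[OF H P])
    qed
    have "\<bar>Rr \<mu> p k x' - Rr \<mu> p k x0\<bar> \<le> e / 2" unfolding diff by (rule II_bound[OF H mbd bd])
    thus "dist (Rr \<mu> p k x') (Rr \<mu> p k x0) < e" using e by (simp add: dist_real_def)
  qed
qed

end

definition zw :: "real^'n \<Rightarrow> real^'n \<Rightarrow> complex \<Rightarrow> complex^'n" where
  "zw x a w = (\<chi> i. complex_of_real (x $ i) + w * complex_of_real (a $ i))"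

lemma zw_rev: "rvec (zw x a w) = x + Re w *\<^sub>R a"
  by (simp add: rvec_def zw_def vec_eq_iff)

lemma zw_0: "zw x a 0 = cvec x"
  by (simp add: zw_def cvec_def)

lemma zw_hol: "(\<lambda>w. zw x a w $ i) holomorphic_on S"
  unfolding zw_def by (simp, intro holomorphic_intros)

lemma zw_cont:
  fixes wf :: "'a::topological_space \<Rightarrow> complex"
  shows "continuous_on S wf \<Longrightarrow> continuous_on S (\<lambda>q. zw x a (wf q))"
  unfolding zw_def by (intro continuous_on_vec_lambda continuous_intros)

lemma circ_Re: "Re (circlepath 0 r t) = r * cos (2 * pi * t)"
  by (simp add: circlepath Re_exp)

lemma circ_norm: "r \<ge> 0 \<Longrightarrow> cmod (circlepath 0 r t) = r"
  by (simp add: circlepath norm_mult)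

lemma circ_cont:
  fixes tf :: "'a::topological_space \<Rightarrow> real"
  shows "continuous_on S tf \<Longrightarrow> continuous_on S (\<lambda>q. circlepath 0 r (tf q))"
  unfolding circlepath by (intro continuous_intros)

lemma unitary_mult_iff: "W \<in> unitary_group \<Longrightarrow> (U ** W \<in> unitary_group \<longleftrightarrow> U \<in> unitary_group)"
proof
  assume W: "W \<in> unitary_group" and UW: "U ** W \<in> unitary_group"
  have "U = (U ** W) ** cadj W" using W by (metis matrix_mul_assoc matrix_mul_rid unitary_iff)
  thus "U \<in> unitary_group" using unitary_mult[OF UW unitary_cadj[OF W]] by simp
qed (rule unitary_mult)

lemma ind_Icc_meas:
  fixes tf :: "'a::topological_space \<Rightarrow> real"
  shows "continuous_on UNIV tf \<Longrightarrow> (\<lambda>q. indicator {0..1::real} (tf q) :: real) \<in> borel_measurable borel"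
  using measurable_compose[OF borel_measurable_continuous_onI borel_measurable_indicator[OF atLeastAtMost_borel]]
  by (simp add: o_def)

context
  fixes \<mu> :: "(complex^'n^'n) measure" and p :: "complex^'n^'n \<Rightarrow> complex" and k :: nat
  assumes H: "haar_unitary \<mu>" and P: "poly_fun p"
begin

lemma mv_Rr:
  assumes x: "x \<in> Om p k"
  shows "mvprop (\<lambda>s. Rr \<mu> p k (x + s *\<^sub>R a)) 0"
proof -
  obtain \<epsilon> where e: "\<epsilon> > 0" and be: "ball x \<epsilon> \<subseteq> Om p k"
    using open_contains_ball open_Om[OF P] x by blast
  define \<rho> where "\<rho> = \<epsilon> / (norm a + 1)"
  have na: "norm a + 1 > 0" using norm_ge_zero[of a] by linarith
  have rho: "\<rho> > 0" unfolding \<rho>_def using e na by (rule divide_pos_pos)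
  have inOm: "x + Re w *\<^sub>R a \<in> Om p k" if w: "\<bar>Re w\<bar> < \<rho>" for w
  proof -
    have "norm (Re w *\<^sub>R a) = \<bar>Re w\<bar> * norm a" by simp
    also have "\<dots> \<le> \<bar>Re w\<bar> * (norm a + 1)" by (simp add: mult_left_mono)
    also have "\<dots> < \<rho> * (norm a + 1)" using w na by (intro mult_strict_right_mono) auto
    also have "\<dots> = \<epsilon>" using na by (simp add: \<rho>_def)
    finally have "dist x (x + Re w *\<^sub>R a) < \<epsilon>" by (simp add: dist_norm)
    thus ?thesis using be by auto
  qed
  have nz: "Fz p k U V (zw x a w) \<noteq> 0"
    if "U \<in> unitary_group" "V \<in> unitary_group" "\<bar>Re w\<bar> < \<rho>" for U V w
    by (rule Fz_nonzero[OF that(1,2)]) (simp add: zw_rev inOm[OF that(3)])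
  show ?thesis unfolding mvprop_def
  proof (intro exI conjI allI impI)
    show "\<rho> > 0" by (rule rho)
    fix r assume r: "0 < r \<and> r < \<rho>"
    define L where "L U V t = ln (cmod (Fz p k U V (zw x a (circlepath 0 r t))))" for U V t
    define Hr where "Hr U V t = Iu U * Iu V * (indicator {0..1} t * L U V t)" for U V and t :: real
    define xt where "xt t = x + (r * cos (2 * pi * t)) *\<^sub>R a" for t
    have reb: "\<bar>Re (circlepath 0 r t)\<bar> < \<rho>" for t
      using abs_Re_le_cmod[of "circlepath 0 r t"] circ_norm[of r t] r by simp
    have xtO: "xt t \<in> Om p k" for t
      using inOm[OF reb[of t]] by (simp add: xt_def circ_Re)
    define K where "K = (unitary_group :: (complex^'n^'n) set) \<times> (unitary_group :: (complex^'n^'n) set) \<times> cball (0::complex) r"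
    have "continuous_on K (\<lambda>q. Fz p k (fst q) (fst (snd q)) (zw x a (snd (snd q))))"
      by (rule Fz_cont[OF P]) (auto simp: K_def intro!: continuous_intros zw_cont)
    moreover have "\<forall>q\<in>K. Fz p k (fst q) (fst (snd q)) (zw x a (snd (snd q))) \<noteq> 0"
    proof
      fix q assume q: "q \<in> K"
      have "\<bar>Re (snd (snd q))\<bar> < \<rho>" using q r abs_Re_le_cmod[of "snd (snd q)"] by (auto simp: K_def)
      thus "Fz p k (fst q) (fst (snd q)) (zw x a (snd (snd q))) \<noteq> 0" using q nz by (auto simp: K_def)
    qed
    ultimately have cln: "continuous_on K (\<lambda>q. ln (cmod (Fz p k (fst q) (fst (snd q)) (zw x a (snd (snd q))))))"
      by (intro continuous_intros) auto
    have cK: "compact K" unfolding K_def by (intro compact_Times compact_unitary compact_cball)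
    obtain B where B: "\<forall>q\<in>K. \<bar>ln (cmod (Fz p k (fst q) (fst (snd q)) (zw x a (snd (snd q)))))\<bar> \<le> B"
      using abs_bound_compact[OF cK cln] by blast
    have "(mat 1, mat 1, 0) \<in> K" using r by (simp add: K_def unitary_mat1)
    hence B0: "B \<ge> 0" using B by fastforce
    have LB: "\<bar>L U V t\<bar> \<le> B" if "U \<in> unitary_group" "V \<in> unitary_group" for U V t
    proof -
      have "(U, V, circlepath 0 r t) \<in> K" using that r circ_norm[of r t] by (simp add: K_def)
      hence "\<bar>ln (cmod (Fz p k (fst (U, V, circlepath 0 r t)) (fst (snd (U, V, circlepath 0 r t))) (zw x a (snd (snd (U, V, circlepath 0 r t))))))\<bar> \<le> B"
        using B by blast
      thus ?thesis by (simp add: L_def)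
    qed
    have HB: "\<bar>Hr U V t\<bar> \<le> B * indicator {0..1} t" for U V t
      using LB[of U V t] B0 by (auto simp: Hr_def Iu_def[OF H P] indicator_def)
    have Hm: "(\<lambda>q. Hr (Uf q) (Vf q) (tf q)) \<in> borel_measurable borel"
      if cU: "continuous_on UNIV Uf" and cV: "continuous_on UNIV Vf" and ct: "continuous_on UNIV tf" for Uf Vf tf
    proof -
      have m1: "(\<lambda>q. Iu (Uf q)) \<in> borel_measurable borel" unfolding Iu_def[OF H P] by (rule ind_meas[OF cU])
      have m2: "(\<lambda>q. Iu (Vf q)) \<in> borel_measurable borel" unfolding Iu_def[OF H P] by (rule ind_meas[OF cV])
      have m3: "(\<lambda>q. indicator {0..1::real} (tf q) :: real) \<in> borel_measurable borel" by (rule ind_Icc_meas[OF ct])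
      have m4: "(\<lambda>q. L (Uf q) (Vf q) (tf q)) \<in> borel_measurable borel"
        unfolding L_def by (rule Fz_meas[OF P cU cV zw_cont[OF circ_cont[OF ct]]])
      show ?thesis unfolding Hr_def by (intro borel_measurable_times m1 m2 m3 m4)
    qed
    have S2: "(\<integral>t. Hr U V t \<partial>lborel) = h0 p k U V x" for U V
    proof (cases "U \<in> unitary_group \<and> V \<in> unitary_group")
      case True
      hence UV: "U \<in> unitary_group" "V \<in> unitary_group" by auto
      have hol: "(\<lambda>w. Fz p k U V (zw x a w)) holomorphic_on ball 0 \<rho>"
        by (rule Fz_holo[OF P UV zw_hol])
      have nzb: "Fz p k U V (zw x a w) \<noteq> 0" if "w \<in> ball 0 \<rho>" for w
        using that abs_Re_le_cmod[of w] by (intro nz[OF UV]) auto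
      have S1: "(L U V has_integral ln (cmod (Fz p k U V (cvec x)))) {0..1}"
        using mean_value_ln[OF hol nzb] r unfolding L_def by (simp add: zw_0)
      have cL: "continuous_on {0..1} (L U V)"
      proof -
        have "continuous_on {0..1} (\<lambda>t. Fz p k U V (zw x a (circlepath 0 r t)))"
          by (rule Fz_cont[OF P]) (auto intro!: continuous_intros zw_cont circ_cont simp: UV)
        moreover have "\<forall>t\<in>{0..1}. Fz p k U V (zw x a (circlepath 0 r t)) \<noteq> 0" using nz[OF UV reb] by blast
        ultimately show ?thesis unfolding L_def by (intro continuous_intros) auto
      qed
      have si: "set_integrable lborel {0..1} (L U V)"
        unfolding set_integrable_def by (rule borel_integrable_compact[OF compact_Icc cL])
      have "(\<integral>t. Hr U V t \<partial>lborel) = (LINT t:{0..1}|lborel. L U V t)"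
        unfolding set_lebesgue_integral_def using UV by (simp add: Hr_def Iu_def[OF H P])
      also have "\<dots> = integral {0..1} (L U V)" by (rule set_borel_integral_eq_integral(2)[OF si])
      also have "\<dots> = ln (cmod (Fz p k U V (cvec x)))" using S1 by (rule integral_unique)
      finally show ?thesis using UV by (simp add: h0_def[OF H P] Iu_def[OF H P])
    next
      case False
      hence "Hr U V t = 0" for t by (auto simp: Hr_def Iu_def[OF H P])
      moreover have "h0 p k U V x = 0" using False by (auto simp: h0_def[OF H P] Iu_def[OF H P])
      ultimately show ?thesis by simp
    qed
    have S4: "(\<integral>V. (\<integral>t. Hr U V t \<partial>lborel) \<partial>\<mu>) = (\<integral>t. (\<integral>V. Hr U V t \<partial>\<mu>) \<partial>lborel)" for U
      by (rule fub_t[OF H, where B=B]) (intro Hm continuous_intros, rule HB)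
    have iV: "integrable \<mu> (\<lambda>V. Hr U V t)" for U t
      by (rule int_bounded[OF H _ HB]) (intro Hm continuous_intros)
    have S5: "(\<integral>U. (\<integral>t. (\<integral>V. Hr U V t \<partial>\<mu>) \<partial>lborel) \<partial>\<mu>) = (\<integral>t. (\<integral>U. (\<integral>V. Hr U V t \<partial>\<mu>) \<partial>\<mu>) \<partial>lborel)"
    proof (rule fub_t[OF H, where B=B])
      have "(\<lambda>q. Hr (fst (fst q)) (snd q) (snd (fst q))) \<in> borel_measurable borel"
        by (intro Hm continuous_intros)
      hence "(\<lambda>y. \<integral>V. Hr (fst y) V (snd y) \<partial>\<mu>) \<in> borel_measurable borel"
        by (rule inner_meas[OF H, where G="\<lambda>y V. Hr (fst y) V (snd y)", simplified])
      thus "(\<lambda>q. \<integral>V. Hr (fst q) V (snd q) \<partial>\<mu>) \<in> borel_measurable borel" by simp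
      show "\<bar>\<integral>V. Hr U V t \<partial>\<mu>\<bar> \<le> B * indicator {0..1} t" for U t
        by (rule abs_int_le[OF H iV HB])
    qed
    have S6: "(\<integral>U. (\<integral>V. Hr U V t \<partial>\<mu>) \<partial>\<mu>) = indicator {0..1} t * Rr \<mu> p k (xt t)" for t
    proof (cases "t \<in> {0..1}")
      case True
      define z where "z = zw x a (circlepath 0 r t)"
      define Ph where "Ph = dg (\<lambda>i. cis (Im (z $ i)))"
      have Ph: "Ph \<in> unitary_group" unfolding Ph_def by (rule unitary_phase)
      have rz: "rvec z = xt t" by (simp add: z_def zw_rev circ_Re xt_def)
      have eq: "Hr U V t = h0 p k (U ** Ph) V (xt t)" for U V
      proof -
        have "Fz p k U V z = Fz p k (U ** Ph) V (cvec (xt t))" unfolding Ph_def rz[symmetric] by (rule Fz_shift)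
        moreover have "Iu (U ** Ph) = Iu U" using unitary_mult_iff[OF Ph] by (simp add: Iu_def[OF H P] indicator_def)
        ultimately show ?thesis using True by (simp add: Hr_def h0_def[OF H P] L_def z_def)
      qed
      have gm: "(\<lambda>U. \<integral>V. h0 p k U V (xt t) \<partial>\<mu>) \<in> borel_measurable borel"
        by (rule inner_meas[OF H h0_mb'[OF H P]])
      have "(\<integral>U. (\<integral>V. Hr U V t \<partial>\<mu>) \<partial>\<mu>) = (\<integral>U. (\<lambda>U. \<integral>V. h0 p k U V (xt t) \<partial>\<mu>) (U ** Ph) \<partial>\<mu>)"
        by (simp add: eq)
      also have "\<dots> = (\<integral>U. (\<integral>V. h0 p k U V (xt t) \<partial>\<mu>) \<partial>\<mu>)"
        by (rule H_right_int[OF H Ph gm])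
      also have "\<dots> = Rr \<mu> p k (xt t)" by (simp add: Rr_def[OF H P] II_def)
      finally show ?thesis using True by simp
    next
      case False
      hence "Hr U V t = 0" for U V by (simp add: Hr_def)
      thus ?thesis using False by simp
    qed
    have cR: "continuous_on {0..1} (\<lambda>t. Rr \<mu> p k (xt t))"
      by (rule continuous_on_compose2[OF cont_Rr[OF H P]]) (auto simp: xt_def xtO[unfolded xt_def] intro!: continuous_intros)
    have si: "set_integrable lborel {0..1} (\<lambda>t. Rr \<mu> p k (xt t))"
      unfolding set_integrable_def by (rule borel_integrable_compact[OF compact_Icc cR])
    have "Rr \<mu> p k x = (\<integral>U. (\<integral>V. (\<integral>t. Hr U V t \<partial>lborel) \<partial>\<mu>) \<partial>\<mu>)"
      by (simp add: S2 Rr_def[OF H P] II_def)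
    also have "\<dots> = (\<integral>U. (\<integral>t. (\<integral>V. Hr U V t \<partial>\<mu>) \<partial>lborel) \<partial>\<mu>)" by (simp add: S4)
    also have "\<dots> = (\<integral>t. (\<integral>U. (\<integral>V. Hr U V t \<partial>\<mu>) \<partial>\<mu>) \<partial>lborel)" by (rule S5)
    also have "\<dots> = (\<integral>t. indicator {0..1} t * Rr \<mu> p k (xt t) \<partial>lborel)" by (simp add: S6)
    also have "\<dots> = (LINT t:{0..1}|lborel. Rr \<mu> p k (xt t))" by (simp add: set_lebesgue_integral_def)
    also have "\<dots> = integral {0..1} (\<lambda>t. Rr \<mu> p k (xt t))" by (rule set_borel_integral_eq_integral(2)[OF si])
    finally have "((\<lambda>t. Rr \<mu> p k (xt t)) has_integral Rr \<mu> p k x) {0..1}"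
      using set_borel_integral_eq_integral(1)[OF si] by (simp add: has_integral_integral)
    thus "((\<lambda>t. Rr \<mu> p k (x + (0 + r * cos (2 * pi * t)) *\<^sub>R a)) has_integral Rr \<mu> p k (x + 0 *\<^sub>R a)) {0..1}"
      by (simp add: xt_def)
  qed
qed

end

theorem mainTheorem6:
  fixes f :: "complex^'n^'n \<Rightarrow> complex" and \<mu> :: "(complex^'n^'n) measure"
  assumes "regular_GL f" and "haar_unitary \<mu>"
  shows "(\<forall>C\<in>components (UNIV - sA f). \<exists>a :: real^'n. \<exists>b :: real.
            \<forall>x\<in>C. ronkin \<mu> f x = ereal (a \<bullet> x + b))
       \<and> (UNIV - sA f \<noteq> {} \<longrightarrow> (\<exists>x. ronkin \<mu> f x \<noteq> -\<infinity>))"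
proof -
  note H = assms(2)
  obtain p k where P: "poly_fun p" and fp0: "\<forall>A. det A \<noteq> 0 \<longrightarrow> f A = p A / det A ^ k"
    using assms(1) unfolding regular_GL_def by blast
  have fp: "\<And>A. det A \<noteq> 0 \<Longrightarrow> f A = p A / det A ^ k" using fp0 by blast
  have sub: "UNIV - sA f \<subseteq> Om p k" by (rule sA_sub_Om[OF fp])
  have aff: "\<exists>a b. \<forall>x\<in>C'. Rr \<mu> p k x = a \<bullet> x + b" if "C' \<in> components (Om p k)" for C'
    by (rule affine_component[OF open_Om[OF P] cont_Rr[OF H P] mv_Rr[OF H P] that])
  have part1: "\<forall>C\<in>components (UNIV - sA f). \<exists>a :: real^'n. \<exists>b :: real. \<forall>x\<in>C. ronkin \<mu> f x = ereal (a \<bullet> x + b)"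
  proof
    fix C assume C: "C \<in> components (UNIV - sA f)"
    obtain x0 where x0: "x0 \<in> C" using in_components_nonempty[OF C] by blast
    have CS: "C \<subseteq> Om p k" using in_components_subset[OF C] sub by blast
    have "C \<subseteq> connected_component_set (Om p k) x0"
      by (rule connected_component_maximal[OF x0 in_components_connected[OF C] CS])
    moreover have "connected_component_set (Om p k) x0 \<in> components (Om p k)"
      using x0 CS by (intro componentsI) blast
    ultimately obtain a b where ab: "\<forall>x\<in>C. Rr \<mu> p k x = a \<bullet> x + b" using aff by blast
    show "\<exists>a :: real^'n. \<exists>b :: real. \<forall>x\<in>C. ronkin \<mu> f x = ereal (a \<bullet> x + b)"
    proof (intro exI ballI)
      fix x assume x: "x \<in> C"
      show "ronkin \<mu> f x = ereal (a \<bullet> x + b)" using ronkin_eq[OF H P fp] CS x ab by auto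
    qed
  qed
  have part2: "UNIV - sA f \<noteq> {} \<longrightarrow> (\<exists>x. ronkin \<mu> f x \<noteq> -\<infinity>)"
  proof
    assume "UNIV - sA f \<noteq> {}"
    then obtain x where "x \<in> UNIV - sA f" by blast
    hence "ronkin \<mu> f x = ereal (Rr \<mu> p k x)" using ronkin_eq[OF H P fp] sub by blast
    thus "\<exists>x. ronkin \<mu> f x \<noteq> -\<infinity>" by (intro exI[where x=x]) simp
  qed
  show ?thesis using part1 part2 by blast
qed


end
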